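(* Let $\mathcal A$ be a $\mathcal{SHIQ}$-Abox (with all concepts in negation normal form) and $\mathcal R$ a role hierarchy. The completion algorithm terminates when started for $\mathcal A$ and $\mathcal R$.
   Context: $\mathcal{SHIQ}$: roles are role names and inverses $R^-$ ($\mathrm{Inv}(R)=R^-$, $\mathrm{Inv}(S^-)=S$); some role names are transitive, $\mathrm{Trans}(R)$ iff $R$ or $\mathrm{Inv}(R)$ is a transitive role name. A role hierarchy $\mathcal R$ is a set of role inclusions $R\sqsubseteq S$; $\sqsubseteq^*$ is the reflexive-transitive closure of $\sqsubseteq$ over $\mathcal R\cup\{\mathrm{Inv}(R)\sqsubseteq\mathrm{Inv}(S)\mid R\sqsubseteq S\in\mathcal R\}$; a role is simple if neither transitive nor having a transitive sub-role. Concepts: concept names, $\sqcap,\sqcup,\neg$, $\forall R.C$, $\exists R.C$, $(\geqslant n\,S\,C)$, $(\leqslant n\,S\,C)$ ($S$ simple). An Abox is a finite set of assertions $a:C$, $(a,b):R$, $a\not\doteq b$. NNF: negation only before concept names; $\sim C$ is the NNF of $\neg C$ (with $\neg(\leqslant n\,R\,C)\equiv(\geqslant(n{+}1)\,R\,C)$, $\neg(\geqslant n\,R\,C)\equiv(\leqslant(n{-}1)\,R\,C)$, $(\leqslant(-1)\,R\,C):=A\sqcap\neg A$). $\mathsf{clos}(\mathcal A)$ is the union over $a:C\in\mathcal A$ of the smallest set containing $C$ closed under subconcepts and $\sim$. $\mathbf R_{\mathcal A}$: roles in $\mathcal A$ and $\mathcal R$ with their inverses. Completion forest: a collection of trees whose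 root nodes may be connected by edges arbitrarily; each node $x$ has a label $\mathcal L(x)\subseteq\mathsf{clos}(\mathcal A)$, each edge $\langle x,y\rangle$ a label $\mathcal L(\langle x,y\rangle)\subseteq\mathbf R_{\mathcal A}$; there are symmetric relations $\not\doteq$ and $\doteq$ on nodes. If $R\in\mathcal L(\langle x,y\rangle)$ and $R\sqsubseteq^*S$, then $y$ is an $S$-successor of $x$ and $x$ an $\mathrm{Inv}(S)$-predecessor of $y$; $y$ is an $S$-neighbour of $x$ if it is an $S$-successor or $\mathrm{Inv}(S)$-predecessor of $x$; successor/predecessor/neighbour means for some $S$; ancestor is the transitive closure of predecessor. $S^{\mathcal F}(x,C)=\{y\mid y$ an $S$-neighbour of $x$, $C\in\mathcal L(y)\}$. Blocking: a node is blocked iff it is not a root and is directly or indirectly blocked. $x$ is directly blocked iff none of its ancestors is blocked and it has ancestors $x',y,y'$ with $y$ not a root, $x$ a successor of $x'$, $y$ a successor of $y'$, $\mathcal L(x)=\mathcal L(y)$, $\mathcal L(x')=\mathcal L(y')$, $\mathcal L(\langle x',x\rangle)=\mathcal L(\langle y',y\rangle)$ ($y$ blocks $x$). A node $y$ is indirectly blocked iff an ancestor is blocked or it is a successor of some $x$ with $\mathcal L(\langle x,y\rangle)=\emptyset$. Initial forest: one root $x^i$ per individual $a_i$ of $\mathcal A$ with $\mathcal L(x^i)=\{C\mid a_i:C\in\mathcal A\}$; an edge $\langle x^i,x^j\rangle$ labelled $\{R\mid(a_i,a_j):R\in\mathcal A\}$ whenever this set is nonempty; $x^i\not\doteq x^j$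 iff $a_i\not\doteq a_j\in\mathcal A$; $\doteq$ empty. Expansion rules ($\bowtie\in\{\leqslant,\geqslant\}$): $\sqcap$: if $C_1\sqcap C_2\in\mathcal L(x)$, $x$ not indirectly blocked, $\{C_1,C_2\}\not\subseteq\mathcal L(x)$: add $C_1,C_2$ to $\mathcal L(x)$. $\sqcup$: if $C_1\sqcup C_2\in\mathcal L(x)$, $x$ not indirectly blocked, $\{C_1,C_2\}\cap\mathcal L(x)=\emptyset$: add $C_1$ or $C_2$ (nondeterministic choice). $\exists$: if $\exists S.C\in\mathcal L(x)$, $x$ not blocked, and $x$ has no $S$-neighbour $y$ with $C\in\mathcal L(y)$: create a new node $y$ with $\mathcal L(\langle x,y\rangle)=\{S\}$, $\mathcal L(y)=\{C\}$. $\forall$: if $\forall S.C\in\mathcal L(x)$, $x$ not indirectly blocked, and some $S$-neighbour $y$ has $C\notin\mathcal L(y)$: add $C$ to $\mathcal L(y)$. $\forall_+$: if $\forall S.C\in\mathcal L(x)$, $x$ not indirectly blocked, some $R$ with $\mathrm{Trans}(R)$, $R\sqsubseteq^*S$, and some $R$-neighbour $y$ of $x$ has $\forall R.C\notin\mathcal L(y)$: add $\forall R.C$ to $\mathcal L(y)$. choose: if $(\bowtie n\,S\,C)\in\mathcal L(x)$, $x$ not indirectly blocked, and some $S$-neighbour $y$ has $\{C,\sim C\}\cap\mathcal L(y)=\emptyset$: add $C$ or $\sim C$ to $\mathcal L(y)$. $\geqslant$: if $(\geqslant n\,S\,C)\in\mathcal L(x)$, $x$ not blocked, and there are no $n$ $S$-neighbours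 $y_1,\dots,y_n$ with $C\in\mathcal L(y_i)$ and $y_i\not\doteq y_j$ for $i<j$: create $n$ new nodes $y_i$ with $\mathcal L(\langle x,y_i\rangle)=\{S\}$, $\mathcal L(y_i)=\{C\}$, $y_i\not\doteq y_j$ for $i<j$. $\leqslant$: if $(\leqslant n\,S\,C)\in\mathcal L(x)$, $x$ not indirectly blocked, $\#S^{\mathcal F}(x,C)>n$, and there are $S$-neighbours $y,z$ of $x$ with $y\not\doteq z$ not holding, $y$ neither a root nor an ancestor of $z$, $C\in\mathcal L(y)\cap\mathcal L(z)$: (1) add $\mathcal L(y)$ to $\mathcal L(z)$; (2) if $z$ is an ancestor of $x$, add $\{\mathrm{Inv}(R)\mid R\in\mathcal L(\langle x,y\rangle)\}$ to $\mathcal L(\langle z,x\rangle)$, else add $\mathcal L(\langle x,y\rangle)$ to $\mathcal L(\langle x,z\rangle)$; (3) set $\mathcal L(\langle x,y\rangle)=\emptyset$; (4) set $u\not\doteq z$ for all $u$ with $u\not\doteq y$. $\leqslant_r$: if $(\leqslant n\,S\,C)\in\mathcal L(x)$, $\#S^{\mathcal F}(x,C)>n$, and there are two $S$-neighbours $y,z$ of $x$ that are both roots with $C\in\mathcal L(y)\cap\mathcal L(z)$ and not $y\not\doteq z$: (1) add $\mathcal L(y)$ to $\mathcal L(z)$; (2) for every edge $\langle y,w\rangle$, create $\langle z,w\rangle$ with empty label if absent and add $\mathcal L(\langle y,w\rangle)$ to $\mathcal L(\langle z,w\rangle)$; (3) likewise for every edge $\langle w,y\rangle$ into $\langle w,z\rangle$;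 (4) set $\mathcal L(y)=\emptyset$ and remove all edges to/from $y$; (5) set $u\not\doteq z$ for all $u$ with $u\not\doteq y$, and set $y\doteq z$. A node label contains a clash if $\{A,\neg A\}\subseteq\mathcal L(x)$ for a concept name $A$, or $(\leqslant n\,S\,C)\in\mathcal L(x)$ and $x$ has $n+1$ $S$-neighbours $y_0,\dots,y_n$ with $C\in\mathcal L(y_i)$ and $y_i\not\doteq y_j$ for $i<j$. A forest is complete if no rule applies. The completion algorithm starts from the initial forest and applies the expansion rules, stopping when a clash occurs; it answers "$\mathcal A$ is consistent w.r.t. $\mathcal R$" iff the rules can be applied so as to yield a complete and clash-free completion forest, and "inconsistent" otherwise. *)

theory Defs
  imports Main
begin

datatype 'r role = RName 'r | RInv 'r

fun inv :: "'r role \<Rightarrow> 'r role" where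
  "inv (RName r) = RInv r"
| "inv (RInv r) = RName r"

fun rname :: "'r role \<Rightarrow> 'r" where
  "rname (RName r) = r"
| "rname (RInv r) = r"

text \<open>A role hierarchy is a set of role inclusions, given as pairs (R, S) meaning R below S.
  The reflexive-transitive closure of the hierarchy extended by the inverse inclusions.\<close>
definition subrole :: "('r role \<times> 'r role) set \<Rightarrow> 'r role \<Rightarrow> 'r role \<Rightarrow> bool" where
  "subrole Rh R S \<longleftrightarrow> (R, S) \<in> (Rh \<union> {(inv R', inv S') | R' S'. (R', S') \<in> Rh})\<^sup>*"

definition Trans :: "'r set \<Rightarrow> 'r role \<Rightarrow> bool" where
  "Trans Tr R \<longleftrightarrow> rname R \<in> Tr"

definition simple_role :: "'r set \<Rightarrow> ('r role \<times> 'r role) set \<Rightarrow> 'r role \<Rightarrow> bool" where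
  "simple_role Tr Rh S \<longleftrightarrow> \<not> Trans Tr S \<and> (\<forall>R. subrole Rh R S \<longrightarrow> \<not> Trans Tr R)"

datatype ('c, 'r) concept =
    CName 'c
  | CNeg "('c, 'r) concept"
  | CAnd "('c, 'r) concept" "('c, 'r) concept"
  | COr "('c, 'r) concept" "('c, 'r) concept"
  | CAll "'r role" "('c, 'r) concept"
  | CEx "'r role" "('c, 'r) concept"
  | CAtLeast nat "'r role" "('c, 'r) concept"
  | CAtMost nat "'r role" "('c, 'r) concept"

text \<open>Negation normal form. The parameter A0 is the concept name used in the
  convention (at-most (-1) R C) := A0 and not A0.\<close>
fun nnf :: "'c \<Rightarrow> ('c, 'r) concept \<Rightarrow> ('c, 'r) concept"
and neg_nnf :: "'c \<Rightarrow> ('c, 'r) concept \<Rightarrow> ('c, 'r) concept" where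
  "nnf A0 (CName A) = CName A"
| "nnf A0 (CNeg C) = neg_nnf A0 C"
| "nnf A0 (CAnd C D) = CAnd (nnf A0 C) (nnf A0 D)"
| "nnf A0 (COr C D) = COr (nnf A0 C) (nnf A0 D)"
| "nnf A0 (CAll R C) = CAll R (nnf A0 C)"
| "nnf A0 (CEx R C) = CEx R (nnf A0 C)"
| "nnf A0 (CAtLeast n R C) = CAtLeast n R (nnf A0 C)"
| "nnf A0 (CAtMost n R C) = CAtMost n R (nnf A0 C)"
| "neg_nnf A0 (CName A) = CNeg (CName A)"
| "neg_nnf A0 (CNeg C) = nnf A0 C"
| "neg_nnf A0 (CAnd C D) = COr (neg_nnf A0 C) (neg_nnf A0 D)"
| "neg_nnf A0 (COr C D) = CAnd (neg_nnf A0 C) (neg_nnf A0 D)"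
| "neg_nnf A0 (CAll R C) = CEx R (neg_nnf A0 C)"
| "neg_nnf A0 (CEx R C) = CAll R (neg_nnf A0 C)"
| "neg_nnf A0 (CAtMost n R C) = CAtLeast (Suc n) R (nnf A0 C)"
| "neg_nnf A0 (CAtLeast n R C) =
     (if n = 0 then CAnd (CName A0) (CNeg (CName A0)) else CAtMost (n - 1) R (nnf A0 C))"

definition sim :: "'c \<Rightarrow> ('c, 'r) concept \<Rightarrow> ('c, 'r) concept" where
  "sim A0 C = neg_nnf A0 C"

fun is_nnf :: "('c, 'r) concept \<Rightarrow> bool" where
  "is_nnf (CName A) = True"
| "is_nnf (CNeg (CName A)) = True"
| "is_nnf (CNeg C) = False"
| "is_nnf (CAnd C D) = (is_nnf C \<and> is_nnf D)"
| "is_nnf (COr C D) = (is_nnf C \<and> is_nnf D)"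
| "is_nnf (CAll R C) = is_nnf C"
| "is_nnf (CEx R C) = is_nnf C"
| "is_nnf (CAtLeast n R C) = is_nnf C"
| "is_nnf (CAtMost n R C) = is_nnf C"

fun nr_simple :: "'r set \<Rightarrow> ('r role \<times> 'r role) set \<Rightarrow> ('c, 'r) concept \<Rightarrow> bool" where
  "nr_simple Tr Rh (CName A) = True"
| "nr_simple Tr Rh (CNeg C) = nr_simple Tr Rh C"
| "nr_simple Tr Rh (CAnd C D) = (nr_simple Tr Rh C \<and> nr_simple Tr Rh D)"
| "nr_simple Tr Rh (COr C D) = (nr_simple Tr Rh C \<and> nr_simple Tr Rh D)"
| "nr_simple Tr Rh (CAll R C) = nr_simple Tr Rh C"
| "nr_simple Tr Rh (CEx R C) = nr_simple Tr Rh C"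
| "nr_simple Tr Rh (CAtLeast n R C) = (simple_role Tr Rh R \<and> nr_simple Tr Rh C)"
| "nr_simple Tr Rh (CAtMost n R C) = (simple_role Tr Rh R \<and> nr_simple Tr Rh C)"

datatype ('i, 'c, 'r) assertion =
    CAssert 'i "('c, 'r) concept"
  | RAssert 'i 'i "'r role"
  | NeqAssert 'i 'i

definition shiq_abox :: "'r set \<Rightarrow> ('r role \<times> 'r role) set \<Rightarrow> ('i, 'c, 'r) assertion set \<Rightarrow> bool" where
  "shiq_abox Tr Rh Ab \<longleftrightarrow> finite Ab \<and>
     (\<forall>a C. CAssert a C \<in> Ab \<longrightarrow> is_nnf C \<and> nr_simple Tr Rh C)"

definition individuals :: "('i, 'c, 'r) assertion set \<Rightarrow> 'i set" where
  "individuals Ab = {a. \<exists>C. CAssert a C \<in> Ab}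
     \<union> {a. \<exists>b R. RAssert a b R \<in> Ab \<or> RAssert b a R \<in> Ab}
     \<union> {a. \<exists>b. NeqAssert a b \<in> Ab \<or> NeqAssert b a \<in> Ab}"

text \<open>Nodes: root nodes x^i are \<open>Root a\<close> for individuals a; nodes generated by the rules are \<open>New k\<close>.\<close>
datatype 'i node = Root 'i | New nat

definition is_root :: "'i node \<Rightarrow> bool" where
  "is_root x \<longleftrightarrow> (\<exists>a. x = Root a)"

record ('i, 'c, 'r) forest =
  nodes :: "'i node set"
  edges :: "('i node \<times> 'i node) set"
  lab   :: "'i node \<Rightarrow> ('c, 'r) concept set"
  elab  :: "'i node \<Rightarrow> 'i node \<Rightarrow> 'r role set"
  neqr  :: "('i node \<times> 'i node) set"
  eqr   :: "('i node \<times> 'i node) set"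

definition init_forest :: "('i, 'c, 'r) assertion set \<Rightarrow> ('i, 'c, 'r) forest" where
  "init_forest Ab = \<lparr> nodes = Root ` individuals Ab,
      edges = {(Root a, Root b) | a b. \<exists>R. RAssert a b R \<in> Ab},
      lab = (\<lambda>x. case x of Root a \<Rightarrow> {C. CAssert a C \<in> Ab} | New k \<Rightarrow> {}),
      elab = (\<lambda>x y. case (x, y) of (Root a, Root b) \<Rightarrow> {R. RAssert a b R \<in> Ab} | _ \<Rightarrow> {}),
      neqr = {(Root a, Root b) | a b. NeqAssert a b \<in> Ab \<or> NeqAssert b a \<in> Ab},
      eqr = {} \<rparr>"

definition succ_r :: "('r role \<times> 'r role) set \<Rightarrow> ('i, 'c, 'r) forest \<Rightarrow> 'i node \<Rightarrow> 'i node \<Rightarrow> 'r role \<Rightarrow> bool" where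
  "succ_r Rh F x y S \<longleftrightarrow> (x, y) \<in> edges F \<and> (\<exists>R \<in> elab F x y. subrole Rh R S)"

definition nbr :: "('r role \<times> 'r role) set \<Rightarrow> ('i, 'c, 'r) forest \<Rightarrow> 'i node \<Rightarrow> 'i node \<Rightarrow> 'r role \<Rightarrow> bool" where
  "nbr Rh F x y S \<longleftrightarrow> succ_r Rh F x y S \<or> succ_r Rh F y x (inv S)"

definition is_succ :: "('r role \<times> 'r role) set \<Rightarrow> ('i, 'c, 'r) forest \<Rightarrow> 'i node \<Rightarrow> 'i node \<Rightarrow> bool" where
  "is_succ Rh F x y \<longleftrightarrow> (\<exists>S. succ_r Rh F x y S)"

definition ancestor :: "('r role \<times> 'r role) set \<Rightarrow> ('i, 'c, 'r) forest \<Rightarrow> 'i node \<Rightarrow> 'i node \<Rightarrow> bool" where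
  "ancestor Rh F a x \<longleftrightarrow> (a, x) \<in> {(u, v). is_succ Rh F u v}\<^sup>+"

definition SF :: "('r role \<times> 'r role) set \<Rightarrow> ('i, 'c, 'r) forest \<Rightarrow> 'i node \<Rightarrow> 'r role \<Rightarrow> ('c, 'r) concept \<Rightarrow> 'i node set" where
  "SF Rh F x S C = {y. nbr Rh F x y S \<and> C \<in> lab F y}"

definition dblock_cond :: "('r role \<times> 'r role) set \<Rightarrow> ('i, 'c, 'r) forest \<Rightarrow> 'i node \<Rightarrow> bool" where
  "dblock_cond Rh F x \<longleftrightarrow> (\<exists>x' y y'. ancestor Rh F x' x \<and> ancestor Rh F y x \<and> ancestor Rh F y' x
      \<and> \<not> is_root y \<and> is_succ Rh F x' x \<and> is_succ Rh F y' y
      \<and> lab F x = lab F y \<and> lab F x' = lab F y' \<and> elab F x' x = elab F y' y)"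

definition empty_edge_cond :: "('i, 'c, 'r) forest \<Rightarrow> 'i node \<Rightarrow> bool" where
  "empty_edge_cond F x \<longleftrightarrow> (\<exists>u. (u, x) \<in> edges F \<and> elab F u x = {})"

text \<open>Blocking (closed form of the mutually recursive definition).\<close>
definition blocked :: "('r role \<times> 'r role) set \<Rightarrow> ('i, 'c, 'r) forest \<Rightarrow> 'i node \<Rightarrow> bool" where
  "blocked Rh F x \<longleftrightarrow> \<not> is_root x \<and>
     (\<exists>a. (a = x \<or> ancestor Rh F a x) \<and> \<not> is_root a \<and> (dblock_cond Rh F a \<or> empty_edge_cond F a))"

definition directly_blocked :: "('r role \<times> 'r role) set \<Rightarrow> ('i, 'c, 'r) forest \<Rightarrow> 'i node \<Rightarrow> bool" where
  "directly_blocked Rh F x \<longleftrightarrow> (\<forall>a. ancestor Rh F a x \<longrightarrow> \<not> blocked Rh F a) \<and> dblock_cond Rh F x"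

definition indirectly_blocked :: "('r role \<times> 'r role) set \<Rightarrow> ('i, 'c, 'r) forest \<Rightarrow> 'i node \<Rightarrow> bool" where
  "indirectly_blocked Rh F x \<longleftrightarrow> (\<exists>a. ancestor Rh F a x \<and> blocked Rh F a) \<or> empty_edge_cond F x"

definition add_lab :: "('i, 'c, 'r) forest \<Rightarrow> 'i node \<Rightarrow> ('c, 'r) concept set \<Rightarrow> ('i, 'c, 'r) forest" where
  "add_lab F x Cs = F\<lparr>lab := (lab F)(x := lab F x \<union> Cs)\<rparr>"

definition add_elab :: "('i, 'c, 'r) forest \<Rightarrow> 'i node \<Rightarrow> 'i node \<Rightarrow> 'r role set \<Rightarrow> ('i, 'c, 'r) forest" where
  "add_elab F u v Rs = F\<lparr>edges := insert (u, v) (edges F),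
     elab := (elab F)(u := (elab F u)(v := (if (u, v) \<in> edges F then elab F u v else {}) \<union> Rs))\<rparr>"

definition and_rule :: "('r role \<times> 'r role) set \<Rightarrow> ('i, 'c, 'r) forest \<Rightarrow> ('i, 'c, 'r) forest \<Rightarrow> bool" where
  "and_rule Rh F F' \<longleftrightarrow> (\<exists>x C1 C2. x \<in> nodes F \<and> CAnd C1 C2 \<in> lab F x \<and> \<not> indirectly_blocked Rh F x
     \<and> \<not> {C1, C2} \<subseteq> lab F x \<and> F' = add_lab F x {C1, C2})"

definition or_rule :: "('r role \<times> 'r role) set \<Rightarrow> ('i, 'c, 'r) forest \<Rightarrow> ('i, 'c, 'r) forest \<Rightarrow> bool" where
  "or_rule Rh F F' \<longleftrightarrow> (\<exists>x C1 C2. x \<in> nodes F \<and> COr C1 C2 \<in> lab F x \<and> \<not> indirectly_blocked Rh F x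
     \<and> {C1, C2} \<inter> lab F x = {} \<and> (F' = add_lab F x {C1} \<or> F' = add_lab F x {C2}))"

definition ex_rule :: "('r role \<times> 'r role) set \<Rightarrow> ('i, 'c, 'r) forest \<Rightarrow> ('i, 'c, 'r) forest \<Rightarrow> bool" where
  "ex_rule Rh F F' \<longleftrightarrow> (\<exists>x S C k. x \<in> nodes F \<and> CEx S C \<in> lab F x \<and> \<not> blocked Rh F x
     \<and> \<not> (\<exists>y. nbr Rh F x y S \<and> C \<in> lab F y) \<and> New k \<notin> nodes F
     \<and> F' = F\<lparr>nodes := insert (New k) (nodes F), edges := insert (x, New k) (edges F),
               lab := (lab F)(New k := {C}), elab := (elab F)(x := (elab F x)(New k := {S}))\<rparr>)"

definition all_rule :: "('r role \<times> 'r role) set \<Rightarrow> ('i, 'c, 'r) forest \<Rightarrow> ('i, 'c, 'r) forest \<Rightarrow> bool" where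
  "all_rule Rh F F' \<longleftrightarrow> (\<exists>x S C y. x \<in> nodes F \<and> CAll S C \<in> lab F x \<and> \<not> indirectly_blocked Rh F x
     \<and> nbr Rh F x y S \<and> C \<notin> lab F y \<and> F' = add_lab F y {C})"

definition all_plus_rule :: "'r set \<Rightarrow> ('r role \<times> 'r role) set \<Rightarrow> ('i, 'c, 'r) forest \<Rightarrow> ('i, 'c, 'r) forest \<Rightarrow> bool" where
  "all_plus_rule Tr Rh F F' \<longleftrightarrow> (\<exists>x S C R y. x \<in> nodes F \<and> CAll S C \<in> lab F x \<and> \<not> indirectly_blocked Rh F x
     \<and> Trans Tr R \<and> subrole Rh R S \<and> nbr Rh F x y R \<and> CAll R C \<notin> lab F y
     \<and> F' = add_lab F y {CAll R C})"

definition choose_rule :: "'c \<Rightarrow> ('r role \<times> 'r role) set \<Rightarrow> ('i, 'c, 'r) forest \<Rightarrow> ('i, 'c, 'r) forest \<Rightarrow> bool" where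
  "choose_rule A0 Rh F F' \<longleftrightarrow> (\<exists>x n S C y. x \<in> nodes F
     \<and> (CAtMost n S C \<in> lab F x \<or> CAtLeast n S C \<in> lab F x) \<and> \<not> indirectly_blocked Rh F x
     \<and> nbr Rh F x y S \<and> {C, sim A0 C} \<inter> lab F y = {}
     \<and> (F' = add_lab F y {C} \<or> F' = add_lab F y {sim A0 C}))"

definition ge_rule :: "('r role \<times> 'r role) set \<Rightarrow> ('i, 'c, 'r) forest \<Rightarrow> ('i, 'c, 'r) forest \<Rightarrow> bool" where
  "ge_rule Rh F F' \<longleftrightarrow> (\<exists>x n S C ks. x \<in> nodes F \<and> CAtLeast n S C \<in> lab F x \<and> \<not> blocked Rh F x
     \<and> \<not> (\<exists>ys. (\<forall>i<n. nbr Rh F x (ys i) S \<and> C \<in> lab F (ys i))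
              \<and> (\<forall>i j. i < j \<and> j < n \<longrightarrow> (ys i, ys j) \<in> neqr F))
     \<and> inj_on ks {..<n} \<and> (\<forall>i<n. New (ks i) \<notin> nodes F)
     \<and> F' = F\<lparr>nodes := nodes F \<union> {New (ks i) | i. i < n},
               edges := edges F \<union> {(x, New (ks i)) | i. i < n},
               lab := (\<lambda>v. if (\<exists>i<n. v = New (ks i)) then {C} else lab F v),
               elab := (\<lambda>u v. if u = x \<and> (\<exists>i<n. v = New (ks i)) then {S} else elab F u v),
               neqr := neqr F \<union> {(New (ks i), New (ks j)) | i j. i < n \<and> j < n \<and> i \<noteq> j}\<rparr>)"

definition le_merge :: "('r role \<times> 'r role) set \<Rightarrow> ('i, 'c, 'r) forest \<Rightarrow> 'i node \<Rightarrow> 'i node \<Rightarrow> 'i node \<Rightarrow> ('i, 'c, 'r) forest" where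
  "le_merge Rh F x y z =
    (let F1 = add_lab F z (lab F y);
         F2 = (if ancestor Rh F z x then add_elab F1 z x (inv ` elab F x y)
               else add_elab F1 x z (elab F x y));
         F3 = F2\<lparr>elab := (elab F2)(x := (elab F2 x)(y := {}))\<rparr>
     in F3\<lparr>neqr := neqr F3 \<union> {(u, z) | u. (u, y) \<in> neqr F3} \<union> {(z, u) | u. (u, y) \<in> neqr F3}\<rparr>)"

definition le_rule :: "('r role \<times> 'r role) set \<Rightarrow> ('i, 'c, 'r) forest \<Rightarrow> ('i, 'c, 'r) forest \<Rightarrow> bool" where
  "le_rule Rh F F' \<longleftrightarrow> (\<exists>x n S C y z. x \<in> nodes F \<and> CAtMost n S C \<in> lab F x \<and> \<not> indirectly_blocked Rh F x
     \<and> card (SF Rh F x S C) > n \<and> nbr Rh F x y S \<and> nbr Rh F x z S \<and> y \<noteq> z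
     \<and> (y, z) \<notin> neqr F \<and> \<not> is_root y \<and> \<not> ancestor Rh F y z \<and> C \<in> lab F y \<and> C \<in> lab F z
     \<and> F' = le_merge Rh F x y z)"

definition ler_merge :: "('i, 'c, 'r) forest \<Rightarrow> 'i node \<Rightarrow> 'i node \<Rightarrow> ('i, 'c, 'r) forest" where
  "ler_merge F y z =
    (let F1 = add_lab F z (lab F y);
         F2 = F1\<lparr>edges := edges F1 \<union> {(z, w) | w. (y, w) \<in> edges F1},
                 elab := (\<lambda>u w. if u = z \<and> (y, w) \<in> edges F1
                                 then (if (z, w) \<in> edges F1 then elab F1 z w else {}) \<union> elab F1 y w
                                 else elab F1 u w)\<rparr>;
         F3 = F2\<lparr>edges := edges F2 \<union> {(w, z) | w. (w, y) \<in> edges F2},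
                 elab := (\<lambda>w u. if u = z \<and> (w, y) \<in> edges F2
                                 then (if (w, z) \<in> edges F2 then elab F2 w z else {}) \<union> elab F2 w y
                                 else elab F2 w u)\<rparr>;
         F4 = F3\<lparr>lab := (lab F3)(y := {}),
                 edges := {e \<in> edges F3. fst e \<noteq> y \<and> snd e \<noteq> y}\<rparr>
     in F4\<lparr>neqr := neqr F4 \<union> {(u, z) | u. (u, y) \<in> neqr F4} \<union> {(z, u) | u. (u, y) \<in> neqr F4},
           eqr := eqr F4 \<union> {(y, z), (z, y)}\<rparr>)"

definition ler_rule :: "('r role \<times> 'r role) set \<Rightarrow> ('i, 'c, 'r) forest \<Rightarrow> ('i, 'c, 'r) forest \<Rightarrow> bool" where
  "ler_rule Rh F F' \<longleftrightarrow> (\<exists>x n S C y z. x \<in> nodes F \<and> CAtMost n S C \<in> lab F x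
     \<and> card (SF Rh F x S C) > n \<and> nbr Rh F x y S \<and> nbr Rh F x z S \<and> y \<noteq> z
     \<and> is_root y \<and> is_root z \<and> C \<in> lab F y \<and> C \<in> lab F z \<and> (y, z) \<notin> neqr F
     \<and> F' = ler_merge F y z)"

definition step :: "'c \<Rightarrow> 'r set \<Rightarrow> ('r role \<times> 'r role) set \<Rightarrow> ('i, 'c, 'r) forest \<Rightarrow> ('i, 'c, 'r) forest \<Rightarrow> bool" where
  "step A0 Tr Rh F F' \<longleftrightarrow> and_rule Rh F F' \<or> or_rule Rh F F' \<or> ex_rule Rh F F' \<or> all_rule Rh F F'
     \<or> all_plus_rule Tr Rh F F' \<or> choose_rule A0 Rh F F' \<or> ge_rule Rh F F' \<or> le_rule Rh F F'
     \<or> ler_rule Rh F F'"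

definition clash :: "('r role \<times> 'r role) set \<Rightarrow> ('i, 'c, 'r) forest \<Rightarrow> bool" where
  "clash Rh F \<longleftrightarrow> (\<exists>x \<in> nodes F.
     (\<exists>A. CName A \<in> lab F x \<and> CNeg (CName A) \<in> lab F x)
   \<or> (\<exists>n S C ys. CAtMost n S C \<in> lab F x
        \<and> (\<forall>i\<le>n. nbr Rh F x (ys i) S \<and> C \<in> lab F (ys i))
        \<and> (\<forall>i j. i < j \<and> j \<le> n \<longrightarrow> (ys i, ys j) \<in> neqr F)))"

end

theory Submission
  imports Defs
begin

fun sub :: "('c, 'r) concept \<Rightarrow> ('c, 'r) concept set" where
  "sub (CName A) = {CName A}"
| "sub (CNeg C) = insert (CNeg C) (sub C)"
| "sub (CAnd C D) = insert (CAnd C D) (sub C \<union> sub D)"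
| "sub (COr C D) = insert (COr C D) (sub C \<union> sub D)"
| "sub (CAll R C) = insert (CAll R C) (sub C)"
| "sub (CEx R C) = insert (CEx R C) (sub C)"
| "sub (CAtLeast n R C) = insert (CAtLeast n R C) (sub C)"
| "sub (CAtMost n R C) = insert (CAtMost n R C) (sub C)"

lemma finite_sub[simp]: "finite (sub C)"
  by (induction C) auto

lemma sub_self[simp]: "C \<in> sub C"
  by (cases C) auto

lemma sub_trans: "D \<in> sub C \<Longrightarrow> sub D \<subseteq> sub C"
  by (induction C) auto

fun fillc :: "('c, 'r) concept \<Rightarrow> ('c, 'r) concept set" where
  "fillc (CAtMost n S C) = {C}"
| "fillc (CAtLeast n S C) = {C}"
| "fillc _ = {}"

definition fill :: "('c, 'r) concept set \<Rightarrow> ('c, 'r) concept set" where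
  "fill X = (\<Union>Y\<in>X. fillc Y)"

lemma fill_iff: "C \<in> fill X \<longleftrightarrow> (\<exists>n S. CAtMost n S C \<in> X \<or> CAtLeast n S C \<in> X)"
proof
  assume "C \<in> fill X"
  then obtain Y where "Y \<in> X" "C \<in> fillc Y" unfolding fill_def by blast
  thus "\<exists>n S. CAtMost n S C \<in> X \<or> CAtLeast n S C \<in> X" by (cases Y) auto
next
  assume "\<exists>n S. CAtMost n S C \<in> X \<or> CAtLeast n S C \<in> X"
  thus "C \<in> fill X" unfolding fill_def by force
qed

lemma fill_mono: "X \<subseteq> Y \<Longrightarrow> fill X \<subseteq> fill Y"
  unfolding fill_def by blast

lemma fill_Un[simp]: "fill (X \<union> Y) = fill X \<union> fill Y"
  unfolding fill_def by blast

lemma fill_insert[simp]: "fill (insert a X) = fillc a \<union> fill X"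
  unfolding fill_def by blast

lemma fill_empty[simp]: "fill {} = {}"
  unfolding fill_def by blast

lemma nnf_id: "is_nnf C \<Longrightarrow> nnf A0 C = C"
  by (induction C rule: is_nnf.induct) auto

lemma nnf_is_nnf: "is_nnf (nnf A0 C) \<and> is_nnf (neg_nnf A0 C)"
  by (induction C) auto

lemma sub_nnf: "is_nnf C \<Longrightarrow> D \<in> sub C \<Longrightarrow> is_nnf D"
  by (induction C rule: is_nnf.induct) auto

lemma fill_neg_nnf: "is_nnf F \<Longrightarrow> fill (sub (neg_nnf A0 F)) \<subseteq> fill (sub F)"
  by (induction F rule: is_nnf.induct) (auto simp: nnf_id)

definition subclosed :: "('c, 'r) concept set \<Rightarrow> bool" where
  "subclosed X \<longleftrightarrow> (\<forall>C\<in>X. sub C \<subseteq> X)"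

definition Bset :: "('i, 'c, 'r) assertion set \<Rightarrow> ('c, 'r) concept set" where
  "Bset Ab = (\<Union>C\<in>{C. \<exists>a. CAssert a C \<in> Ab}. sub C)"

definition B2 :: "'c \<Rightarrow> ('i, 'c, 'r) assertion set \<Rightarrow> ('c, 'r) concept set" where
  "B2 A0 Ab = Bset Ab \<union> (\<Union>F\<in>fill (Bset Ab). sub (neg_nnf A0 F))"

definition RV :: "('r role \<times> 'r role) set \<Rightarrow> 'r role set" where
  "RV Rh = fst ` Rh \<union> inv ` fst ` Rh"

definition CL :: "'c \<Rightarrow> ('r role \<times> 'r role) set \<Rightarrow> ('i, 'c, 'r) assertion set \<Rightarrow> ('c, 'r) concept set" where
  "CL A0 Rh Ab = B2 A0 Ab \<union> {CAll R C | R C. R \<in> RV Rh \<and> (\<exists>S. CAll S C \<in> B2 A0 Ab)}"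

lemma subclosed_Bset: "subclosed (Bset Ab)"
  unfolding subclosed_def Bset_def using sub_trans by fastforce

lemma subclosed_B2: "subclosed (B2 A0 Ab)"
  unfolding subclosed_def B2_def Bset_def using sub_trans by fastforce

lemma finite_Bset: "finite Ab \<Longrightarrow> finite (Bset Ab)"
proof -
  assume f: "finite Ab"
  have "{C. \<exists>a. CAssert a C \<in> Ab} \<subseteq> (\<lambda>x. case x of CAssert a C \<Rightarrow> C | _ \<Rightarrow> undefined) ` Ab"
    by (auto intro: rev_image_eqI)
  hence "finite {C. \<exists>a. CAssert a C \<in> Ab}" using f finite_subset by blast
  thus ?thesis unfolding Bset_def by auto
qed

lemma fill_sub_subclosed: "subclosed X \<Longrightarrow> fill X \<subseteq> X"
proof
  fix C assume a: "subclosed X" "C \<in> fill X"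
  then obtain n S where "CAtMost n S C \<in> X \<or> CAtLeast n S C \<in> X" using fill_iff by blast
  moreover have "C \<in> sub (CAtMost n S C)" "C \<in> sub (CAtLeast n S C)" by auto
  ultimately show "C \<in> X" using a(1) unfolding subclosed_def by blast
qed

lemma finite_B2: "finite Ab \<Longrightarrow> finite (B2 A0 Ab)"
proof -
  assume f: "finite Ab"
  have "fill (Bset Ab) \<subseteq> Bset Ab" using fill_sub_subclosed subclosed_Bset by blast
  hence "finite (fill (Bset Ab))" using finite_Bset[OF f] finite_subset by blast
  thus ?thesis unfolding B2_def using finite_Bset[OF f] by auto
qed

lemma finite_CL: "finite Ab \<Longrightarrow> finite Rh \<Longrightarrow> finite (CL A0 Rh Ab)"
proof -
  assume f: "finite Ab" "finite Rh"
  have "{CAll R C | R C. R \<in> RV Rh \<and> (\<exists>S. CAll S C \<in> B2 A0 Ab)} \<subseteq> (\<lambda>(R, C). CAll R C) ` (RV Rh \<times> B2 A0 Ab)"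
  proof
    fix X assume "X \<in> {CAll R C | R C. R \<in> RV Rh \<and> (\<exists>S. CAll S C \<in> B2 A0 Ab)}"
    then obtain R C S where "X = CAll R C" "R \<in> RV Rh" "CAll S C \<in> B2 A0 Ab" by blast
    moreover have "C \<in> B2 A0 Ab" using subclosed_B2 calculation(3) unfolding subclosed_def by fastforce
    ultimately show "X \<in> (\<lambda>(R, C). CAll R C) ` (RV Rh \<times> B2 A0 Ab)" by auto
  qed
  moreover have "finite (RV Rh)" using f unfolding RV_def by auto
  ultimately show ?thesis unfolding CL_def using finite_B2[OF f(1)] finite_subset by fastforce
qed

lemma inv_inv[simp]: "inv (inv R) = R"
  by (cases R) auto

lemma subrole_refl: "subrole Rh R R"
  unfolding subrole_def by auto

lemma subrole_RV: "subrole Rh R S \<Longrightarrow> R = S \<or> R \<in> RV Rh"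
proof -
  let ?X = "Rh \<union> {(inv R', inv S') | R' S'. (R', S') \<in> Rh}"
  assume "subrole Rh R S"
  hence "(R, S) \<in> ?X\<^sup>*" unfolding subrole_def .
  thus ?thesis
  proof (cases rule: converse_rtranclE)
    case base then show ?thesis by simp
  next
    case (step c)
    then show ?thesis unfolding RV_def by (auto intro: rev_image_eqI)
  qed
qed

lemma subrole_inv: "subrole Rh R S \<Longrightarrow> subrole Rh (inv R) (inv S)"
proof -
  let ?X = "Rh \<union> {(inv R', inv S') | R' S'. (R', S') \<in> Rh}"
  assume "subrole Rh R S"
  hence "(R, S) \<in> ?X\<^sup>*" unfolding subrole_def .
  hence "(inv R, inv S) \<in> ?X\<^sup>*"
  proof (induction rule: rtrancl_induct)
    case base then show ?case by simp
  next
    case (step y z)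
    have "(inv y, inv z) \<in> ?X"
    proof (cases "(y, z) \<in> Rh")
      case True then show ?thesis by blast
    next
      case False
      then obtain R' S' where "y = inv R'" "z = inv S'" "(R', S') \<in> Rh" using step(2) by blast
      then show ?thesis by simp
    qed
    then show ?case using step(3) by (meson rtrancl.simps)
  qed
  thus ?thesis unfolding subrole_def .
qed

context
  fixes A0 :: 'c and Rh :: "('r role \<times> 'r role) set" and Ab :: "('i, 'c, 'r) assertion set"
begin

lemma CL_sub_B2: "X \<in> CL A0 Rh Ab \<Longrightarrow> X \<in> B2 A0 Ab \<or> (\<exists>R C S. X = CAll R C \<and> R \<in> RV Rh \<and> CAll S C \<in> B2 A0 Ab)"
  unfolding CL_def by simp

lemma B2_CL: "X \<in> B2 A0 Ab \<Longrightarrow> X \<in> CL A0 Rh Ab"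
  unfolding CL_def by (rule UnI1)

lemma B2_sub: "X \<in> B2 A0 Ab \<Longrightarrow> Y \<in> sub X \<Longrightarrow> Y \<in> B2 A0 Ab"
  using subclosed_B2[of A0 Ab] unfolding subclosed_def by auto

lemma CL_nonall: "X \<in> CL A0 Rh Ab \<Longrightarrow> (\<And>R C. X \<noteq> CAll R C) \<Longrightarrow> X \<in> B2 A0 Ab"
  using CL_sub_B2[of X] by auto

lemma CL_subc: "X \<in> CL A0 Rh Ab \<Longrightarrow> (\<And>R C. X \<noteq> CAll R C) \<Longrightarrow> Y \<in> sub X \<Longrightarrow> Y \<in> CL A0 Rh Ab"
  by (rule B2_CL, rule B2_sub[OF CL_nonall])

lemma CL_and: "CAnd C1 C2 \<in> CL A0 Rh Ab \<Longrightarrow> C1 \<in> CL A0 Rh Ab \<and> C2 \<in> CL A0 Rh Ab"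
  by (intro conjI; erule CL_subc) auto

lemma CL_or: "COr C1 C2 \<in> CL A0 Rh Ab \<Longrightarrow> C1 \<in> CL A0 Rh Ab \<and> C2 \<in> CL A0 Rh Ab"
  by (intro conjI; erule CL_subc) auto

lemma CL_ex: "CEx S C \<in> CL A0 Rh Ab \<Longrightarrow> C \<in> CL A0 Rh Ab"
  by (erule CL_subc) auto

lemma CL_atleast: "CAtLeast n S C \<in> CL A0 Rh Ab \<Longrightarrow> C \<in> CL A0 Rh Ab"
  by (erule CL_subc) auto

lemma CL_atmost: "CAtMost n S C \<in> CL A0 Rh Ab \<Longrightarrow> C \<in> CL A0 Rh Ab"
  by (erule CL_subc) auto

lemma CL_all: "CAll S C \<in> CL A0 Rh Ab \<Longrightarrow> C \<in> CL A0 Rh Ab"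
proof -
  assume "CAll S C \<in> CL A0 Rh Ab"
  then obtain S' where "CAll S' C \<in> B2 A0 Ab" using CL_sub_B2 by blast
  moreover have "C \<in> sub (CAll S' C)" by simp
  ultimately show ?thesis using B2_sub B2_CL by blast
qed

lemma CL_allplus: "CAll S C \<in> CL A0 Rh Ab \<Longrightarrow> subrole Rh R S \<Longrightarrow> CAll R C \<in> CL A0 Rh Ab"
  using CL_sub_B2[of "CAll S C"] subrole_RV[of Rh R S] unfolding CL_def by blast

end

definition abox_nnf :: "('i, 'c, 'r) assertion set \<Rightarrow> bool" where
  "abox_nnf Ab \<longleftrightarrow> (\<forall>a C. CAssert a C \<in> Ab \<longrightarrow> is_nnf C)"

lemma Bset_nnf: "abox_nnf Ab \<Longrightarrow> X \<in> Bset Ab \<Longrightarrow> is_nnf X"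
  unfolding abox_nnf_def Bset_def using sub_nnf by blast

lemma CL_sim:
  assumes "abox_nnf Ab" and "X \<in> CL A0 Rh Ab" and "X = CAtMost n S C \<or> X = CAtLeast n S C"
  shows "sim A0 C \<in> CL A0 Rh Ab"
proof -
  have X: "X \<in> B2 A0 Ab" using CL_nonall[OF assms(2)] assms(3) by auto
  have CX: "C \<in> fillc X" using assms(3) by auto
  have "C \<in> fill (Bset Ab)"
  proof (cases "X \<in> Bset Ab")
    case True then show ?thesis using CX unfolding fill_def by blast
  next
    case False
    then obtain F where F: "F \<in> fill (Bset Ab)" "X \<in> sub (neg_nnf A0 F)" using X unfolding B2_def by auto
    have FB: "F \<in> Bset Ab" using F(1) fill_sub_subclosed[OF subclosed_Bset] by blast
    hence nF: "is_nnf F" by (rule Bset_nnf[OF assms(1)])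
    have "C \<in> fill (sub (neg_nnf A0 F))" using F(2) CX unfolding fill_def by blast
    hence "C \<in> fill (sub F)" using fill_neg_nnf[OF nF] by blast
    moreover have "sub F \<subseteq> Bset Ab" using FB subclosed_Bset unfolding subclosed_def by blast
    ultimately show ?thesis using fill_mono by blast
  qed
  hence "sub (neg_nnf A0 C) \<subseteq> B2 A0 Ab" unfolding B2_def by blast
  moreover have "neg_nnf A0 C \<in> sub (neg_nnf A0 C)" by simp
  ultimately have "neg_nnf A0 C \<in> B2 A0 Ab" by blast
  thus ?thesis unfolding sim_def by (rule B2_CL)
qed

definition RX :: "'c \<Rightarrow> ('r role \<times> 'r role) set \<Rightarrow> ('i, 'c, 'r) assertion set \<Rightarrow> 'r role set" where
  "RX A0 Rh Ab = {R. \<exists>a b. RAssert a b R \<in> Ab} \<union> {S. \<exists>C. CEx S C \<in> CL A0 Rh Ab} \<union> {S. \<exists>n C. CAtLeast n S C \<in> CL A0 Rh Ab}"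

definition RLs :: "'c \<Rightarrow> ('r role \<times> 'r role) set \<Rightarrow> ('i, 'c, 'r) assertion set \<Rightarrow> 'r role set" where
  "RLs A0 Rh Ab = RX A0 Rh Ab \<union> inv ` RX A0 Rh Ab"

lemma RLs_inv: "R \<in> RLs A0 Rh Ab \<Longrightarrow> inv R \<in> RLs A0 Rh Ab"
proof -
  assume "R \<in> RLs A0 Rh Ab"
  then consider "R \<in> RX A0 Rh Ab" | R' where "R = inv R'" "R' \<in> RX A0 Rh Ab" unfolding RLs_def by blast
  thus ?thesis unfolding RLs_def by cases auto
qed

lemma finite_RLs: "finite Ab \<Longrightarrow> finite Rh \<Longrightarrow> finite (RLs A0 Rh Ab)"
proof -
  assume f: "finite Ab" "finite Rh"
  have 1: "{R. \<exists>a b. RAssert a b R \<in> Ab} \<subseteq> (\<lambda>x. case x of RAssert a b R \<Rightarrow> R | _ \<Rightarrow> undefined) ` Ab"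
    by (auto intro: rev_image_eqI)
  have 2: "{S. \<exists>C. CEx S C \<in> CL A0 Rh Ab} \<union> {S. \<exists>n C. CAtLeast n S C \<in> CL A0 Rh Ab}
     \<subseteq> (\<lambda>x. case x of CEx S C \<Rightarrow> S | CAtLeast n S C \<Rightarrow> S | _ \<Rightarrow> undefined) ` CL A0 Rh Ab"
    by (auto intro: rev_image_eqI)
  have "finite {R. \<exists>a b. RAssert a b R \<in> Ab}" using 1 f(1) finite_subset by blast
  moreover have "finite ({S. \<exists>C. CEx S C \<in> CL A0 Rh Ab} \<union> {S. \<exists>n C. CAtLeast n S C \<in> CL A0 Rh Ab})"
    using 2 finite_CL[OF f] finite_subset by blast
  ultimately have "finite (RX A0 Rh Ab)" unfolding RX_def by (simp add: Un_assoc)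
  thus ?thesis unfolding RLs_def by auto
qed

definition children :: "('i, 'c, 'r) forest \<Rightarrow> 'i node \<Rightarrow> 'i node set" where
  "children F x = {v. (x, v) \<in> edges F \<and> \<not> is_root v}"

definition marked :: "('i, 'c, 'r) forest \<Rightarrow> 'i node \<Rightarrow> bool" where
  "marked F v \<longleftrightarrow> \<not> is_root v \<and> empty_edge_cond F v"

definition deadroot :: "('i, 'c, 'r) forest \<Rightarrow> 'i node \<Rightarrow> bool" where
  "deadroot F x \<longleftrightarrow> is_root x \<and> lab F x = {} \<and> (\<forall>w. (x, w) \<notin> edges F \<and> (w, x) \<notin> edges F)"

fun Sat :: "('r role \<times> 'r role) set \<Rightarrow> ('i, 'c, 'r) forest \<Rightarrow> 'i node \<Rightarrow> ('c, 'r) concept \<Rightarrow> bool" where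
  "Sat Rh F x (CEx S C) = (\<exists>y. nbr Rh F x y S \<and> C \<in> lab F y)"
| "Sat Rh F x (CAtLeast n S C) = (\<exists>ys. inj_on ys {..<n} \<and> (\<forall>i<n. nbr Rh F x (ys i) S \<and> C \<in> lab F (ys i))
      \<and> (\<forall>i j. i < j \<and> j < n \<longrightarrow> (ys i, ys j) \<in> neqr F))"
| "Sat Rh F x _ = True"

definition Sat' :: "('r role \<times> 'r role) set \<Rightarrow> ('i, 'c, 'r) forest \<Rightarrow> 'i node \<Rightarrow> ('c, 'r) concept \<Rightarrow> bool" where
  "Sat' Rh F x D \<longleftrightarrow> Sat Rh F x D \<or> marked F x \<or> deadroot F x"

fun wt :: "('c, 'r) concept \<Rightarrow> nat" where
  "wt (CEx S C) = 1"
| "wt (CAtLeast n S C) = n"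
| "wt _ = 0"

definition rpath :: "('i, 'c, 'r) forest \<Rightarrow> (nat \<Rightarrow> 'i node) \<Rightarrow> nat \<Rightarrow> bool" where
  "rpath F p m \<longleftrightarrow> p 0 \<in> nodes F \<and> is_root (p 0) \<and> (\<forall>j. 0 < j \<and> j \<le> m \<longrightarrow> \<not> is_root (p j))
     \<and> (\<forall>j<m. (p j, p (Suc j)) \<in> edges F)"

definition NE :: "('i, 'c, 'r) forest \<Rightarrow> ('i node \<times> 'i node) set" where
  "NE F = {(u, v). (u, v) \<in> edges F \<and> \<not> is_root u}"

lemma is_root_simps[simp]: "is_root (Root a)" "\<not> is_root (New k)"
  unfolding is_root_def by auto

lemma Sat_transfer:
  assumes nb: "\<And>w S. nbr Rh F x w S \<Longrightarrow> nbr Rh F' x' (\<psi> w) S"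
    and lb: "\<And>w S. nbr Rh F x w S \<Longrightarrow> lab F w \<subseteq> lab F' (\<psi> w)"
    and nq: "\<And>a b. (a, b) \<in> neqr F \<Longrightarrow> a \<noteq> b \<Longrightarrow> (\<psi> a, \<psi> b) \<in> neqr F' \<and> \<psi> a \<noteq> \<psi> b"
    and sy: "sym (neqr F)"
    and S: "Sat Rh F x D"
  shows "Sat Rh F' x' D"
proof (cases D)
  case (CEx S C)
  then obtain y where "nbr Rh F x y S" "C \<in> lab F y" using S by auto
  hence "nbr Rh F' x' (\<psi> y) S" "C \<in> lab F' (\<psi> y)" using nb lb by blast+
  then show ?thesis using CEx by auto
next
  case (CAtLeast n S C)
  then obtain ys where ys: "inj_on ys {..<n}" "\<forall>i<n. nbr Rh F x (ys i) S \<and> C \<in> lab F (ys i)"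
     "\<forall>i j. i < j \<and> j < n \<longrightarrow> (ys i, ys j) \<in> neqr F" using S by auto
  have inj: "inj_on (\<psi> \<circ> ys) {..<n}"
  proof (rule inj_onI)
    fix i j assume ij: "i \<in> {..<n}" "j \<in> {..<n}" "(\<psi> \<circ> ys) i = (\<psi> \<circ> ys) j"
    show "i = j"
    proof (rule ccontr)
      assume "i \<noteq> j"
      hence ne: "ys i \<noteq> ys j" using ys(1) ij(1,2) unfolding inj_on_def by blast
      have "(ys i, ys j) \<in> neqr F"
      proof (cases "i < j")
        case True then show ?thesis using ys(3) ij by auto
      next
        case False then have "(ys j, ys i) \<in> neqr F" using ys(3) ij \<open>i \<noteq> j\<close> by auto
        then show ?thesis using sy unfolding sym_def by blast
      qed
      then show False using nq ne ij(3) by auto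
    qed
  qed
  have "\<forall>i<n. nbr Rh F' x' ((\<psi> \<circ> ys) i) S \<and> C \<in> lab F' ((\<psi> \<circ> ys) i)"
  proof (intro allI impI)
    fix i assume "i < n"
    hence a: "nbr Rh F x (ys i) S" and b: "C \<in> lab F (ys i)" using ys(2) by auto
    have "lab F (ys i) \<subseteq> lab F' (\<psi> (ys i))" using lb[OF a] .
    thus "nbr Rh F' x' ((\<psi> \<circ> ys) i) S \<and> C \<in> lab F' ((\<psi> \<circ> ys) i)" using nb[OF a] b by auto
  qed
  moreover have "\<forall>i j. i < j \<and> j < n \<longrightarrow> ((\<psi> \<circ> ys) i, (\<psi> \<circ> ys) j) \<in> neqr F'"
  proof (intro allI impI)
    fix i j assume "i < j \<and> j < n"
    hence "(ys i, ys j) \<in> neqr F" "ys i \<noteq> ys j" using ys(1,3) unfolding inj_on_def by auto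
    thus "((\<psi> \<circ> ys) i, (\<psi> \<circ> ys) j) \<in> neqr F'" using nq by auto
  qed
  ultimately show ?thesis using CAtLeast inj by auto
qed auto

lemma is_succ_edge: "is_succ Rh F u v \<Longrightarrow> (u, v) \<in> edges F"
  unfolding is_succ_def succ_r_def by auto

lemma is_succ_nonempty: "is_succ Rh F u v \<longleftrightarrow> (u, v) \<in> edges F \<and> elab F u v \<noteq> {}"
  unfolding is_succ_def succ_r_def using subrole_refl by fastforce

lemma ancestor_root:
  assumes i7: "\<And>u v. (u, v) \<in> edges F \<Longrightarrow> is_root v \<Longrightarrow> is_root u"
    and "ancestor Rh F a v" and "is_root v"
  shows "is_root a"
proof -
  have "(a, v) \<in> {(u, v). is_succ Rh F u v}\<^sup>+" using assms(2) unfolding ancestor_def .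
  thus ?thesis using assms(3)
  proof (induction rule: trancl_induct)
    case (base y) then show ?case using i7 is_succ_edge by fastforce
  next
    case (step y z) then show ?case using i7 is_succ_edge by fastforce
  qed
qed

lemma ancestor_NE:
  assumes i7: "\<And>u v. (u, v) \<in> edges F \<Longrightarrow> is_root v \<Longrightarrow> is_root u"
    and "ancestor Rh F a v" and "\<not> is_root a"
  shows "(a, v) \<in> (NE F)\<^sup>+"
proof -
  have "(a, v) \<in> {(u, v). is_succ Rh F u v}\<^sup>+" using assms(2) unfolding ancestor_def .
  thus ?thesis using assms(3)
  proof (induction rule: converse_trancl_induct)
    case (base y) then show ?case using is_succ_edge unfolding NE_def by fastforce
  next
    case (step y z)
    have e: "(y, z) \<in> edges F" using step(1) is_succ_edge by fastforce
    hence "\<not> is_root z" using i7 step(4) by blast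
    hence "(z, v) \<in> (NE F)\<^sup>+" using step(3) by blast
    moreover have "(y, z) \<in> NE F" using e step(4) unfolding NE_def by auto
    ultimately show ?case by (meson trancl_into_trancl2)
  qed
qed

lemma acyclic_add_fresh:
  assumes "acyclic r" and "\<And>t. t \<in> T \<Longrightarrow> t \<notin> Domain r"
    and "\<And>a b. (a, b) \<in> Q \<Longrightarrow> b \<in> T \<and> a \<notin> T"
  shows "acyclic (r \<union> Q)"
proof -
  have key: "(a, b) \<in> (r \<union> Q)\<^sup>+ \<Longrightarrow> (a, b) \<in> r\<^sup>+ \<or> (a, b) \<in> r\<^sup>* O Q" for a b
  proof (induction rule: trancl_induct)
    case (base y) then show ?case by auto
  next
    case (step y z)
    from step(3) show ?case
    proof
      assume ay: "(a, y) \<in> r\<^sup>+"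
      show ?thesis using step(2)
      proof
        assume "(y, z) \<in> r" then show ?thesis using ay by auto
      next
        assume "(y, z) \<in> Q" then show ?thesis using ay by (meson relcomp.relcompI trancl_into_rtrancl)
      qed
    next
      assume "(a, y) \<in> r\<^sup>* O Q"
      then obtain c where "(c, y) \<in> Q" by blast
      hence "y \<in> T" using assms(3) by blast
      hence "y \<notin> Domain r" "y \<notin> Domain Q" using assms(2,3) by blast+
      thus ?thesis using step(2) by blast
    qed
  qed
  show ?thesis unfolding acyclic_def
  proof
    fix x
    show "(x, x) \<notin> (r \<union> Q)\<^sup>+"
    proof
      assume "(x, x) \<in> (r \<union> Q)\<^sup>+"
      hence "(x, x) \<in> r\<^sup>+ \<or> (x, x) \<in> r\<^sup>* O Q" using key by blast
      thus False
      proof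
        assume "(x, x) \<in> r\<^sup>+" then show False using assms(1) unfolding acyclic_def by blast
      next
        assume "(x, x) \<in> r\<^sup>* O Q"
        then obtain c where c: "(x, c) \<in> r\<^sup>*" "(c, x) \<in> Q" by blast
        hence "x \<in> T" "c \<notin> T" using assms(3) by blast+
        hence "x \<notin> Domain r" using assms(2) by blast
        hence "x = c" using c(1) by (meson Domain.DomainI converse_rtranclE)
        thus False using \<open>x \<in> T\<close> \<open>c \<notin> T\<close> by simp
      qed
    qed
  qed
qed

lemma chain_ancestor:
  assumes "\<And>k. i \<le> k \<Longrightarrow> k < j \<Longrightarrow> is_succ Rh F (p k) (p (Suc k))" and "i < j"
  shows "ancestor Rh F (p i) (p j)"
  using assms
proof (induction j)
  case 0 then show ?case by simp
next
  case (Suc j)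
  have s: "(p j, p (Suc j)) \<in> {(u, v). is_succ Rh F u v}" using Suc.prems(1)[of j] Suc.prems(2) by auto
  show ?case
  proof (cases "i = j")
    case True then show ?thesis using s unfolding ancestor_def by auto
  next
    case False
    hence "ancestor Rh F (p i) (p j)" using Suc by auto
    then show ?thesis using s unfolding ancestor_def by (meson trancl.trancl_into_trancl)
  qed
qed

locale tab =
  fixes Ab :: "('i, 'c, 'r) assertion set" and Rh :: "('r role \<times> 'r role) set"
    and Tr :: "'r set" and A0 :: 'c
  assumes finAb: "finite Ab" and finRh: "finite Rh" and nnfAb: "abox_nnf Ab"
begin

abbreviation "CLs \<equiv> CL A0 Rh Ab"
abbreviation "RL \<equiv> RLs A0 Rh Ab"

definition "R0 = Root ` individuals Ab"
definition "Mb = card (Pow CLs \<times> Pow CLs \<times> Pow RL)"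
definition "SW F x = (\<Sum>D\<in>{D\<in>CLs. Sat' Rh F x D}. wt D)"
definition "Wt = (\<Sum>D\<in>CLs. wt D)"

lemma finCL: "finite CLs" using finite_CL[OF finAb finRh] .
lemma finRL: "finite RL" using finite_RLs[OF finAb finRh] .

lemma SW_le_Wt: "SW F x \<le> Wt"
  unfolding SW_def Wt_def by (rule sum_mono2[OF finCL]) auto

lemma SW_mono:
  assumes "\<And>D. Sat' Rh F x D \<Longrightarrow> Sat' Rh F' x D"
  shows "SW F x \<le> SW F' x"
  unfolding SW_def by (rule sum_mono2) (use finCL assms in auto)

lemma SW_mono_new:
  assumes "\<And>D. Sat' Rh F x D \<Longrightarrow> Sat' Rh F' x D" and "D0 \<in> CLs" and "\<not> Sat' Rh F x D0" and "Sat' Rh F' x D0"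
  shows "SW F x + wt D0 \<le> SW F' x"
proof -
  have "SW F x + wt D0 = (\<Sum>D\<in>insert D0 {D\<in>CLs. Sat' Rh F x D}. wt D)"
    unfolding SW_def using assms(3) finCL by (subst sum.insert) auto
  also have "\<dots> \<le> SW F' x" unfolding SW_def
    by (rule sum_mono2) (use finCL assms in auto)
  finally show ?thesis .
qed

definition INV :: "('i, 'c, 'r) forest \<Rightarrow> bool" where
  "INV F \<longleftrightarrow> finite (nodes F) \<and> edges F \<subseteq> nodes F \<times> nodes F
  \<and> (\<forall>v\<in>nodes F. is_root v \<longrightarrow> v \<in> R0) \<and> R0 \<subseteq> nodes F
  \<and> (\<forall>v. lab F v \<subseteq> CLs) \<and> (\<forall>u v. elab F u v \<subseteq> RL) \<and> sym (neqr F)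
  \<and> (\<forall>u v. (u, v) \<in> edges F \<longrightarrow> is_root v \<longrightarrow> is_root u)
  \<and> (\<forall>u u' v. (u, v) \<in> edges F \<longrightarrow> (u', v) \<in> edges F \<longrightarrow> \<not> is_root v \<longrightarrow> u = u')
  \<and> acyclic (NE F)
  \<and> (\<forall>x. \<not> is_root x \<longrightarrow> card (children F x) \<le> SW F x)
  \<and> (\<Sum>r\<in>R0. card (children F r)) \<le> (\<Sum>r\<in>R0. SW F r)
  \<and> (\<forall>v\<in>nodes F. \<not> is_root v \<longrightarrow> (\<exists>p m. m \<le> Suc Mb \<and> rpath F p m \<and> p m = v))"

context
  fixes F assumes I: "INV F"
begin
lemma I_fin: "finite (nodes F)" using I unfolding INV_def by blast
lemma I_edges: "(u, v) \<in> edges F \<Longrightarrow> u \<in> nodes F \<and> v \<in> nodes F" using I unfolding INV_def by blast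
lemma I_roots: "v \<in> nodes F \<Longrightarrow> is_root v \<Longrightarrow> v \<in> R0" using I unfolding INV_def by blast
lemma I_R0: "R0 \<subseteq> nodes F" using I unfolding INV_def by blast
lemma I_lab: "lab F v \<subseteq> CLs" using I unfolding INV_def by blast
lemma I_elab: "elab F u v \<subseteq> RL" using I unfolding INV_def by blast
lemma I_sym: "sym (neqr F)" using I unfolding INV_def by blast
lemma I_rootin: "(u, v) \<in> edges F \<Longrightarrow> is_root v \<Longrightarrow> is_root u" using I unfolding INV_def by blast
lemma I_par: "(u, v) \<in> edges F \<Longrightarrow> (u', v) \<in> edges F \<Longrightarrow> \<not> is_root v \<Longrightarrow> u = u'" using I unfolding INV_def by blast
lemma I_acyc: "acyclic (NE F)" using I unfolding INV_def by blast
lemma I_ch: "\<not> is_root x \<Longrightarrow> card (children F x) \<le> SW F x" using I unfolding INV_def by blast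
lemma I_chR: "(\<Sum>r\<in>R0. card (children F r)) \<le> (\<Sum>r\<in>R0. SW F r)" using I unfolding INV_def by blast
lemma I_path: "v \<in> nodes F \<Longrightarrow> \<not> is_root v \<Longrightarrow> \<exists>p m. m \<le> Suc Mb \<and> rpath F p m \<and> p m = v"
  using I unfolding INV_def by blast

lemma finite_children: "finite (children F x)"
proof -
  have "children F x \<subseteq> nodes F" unfolding children_def using I_edges by blast
  thus ?thesis using I_fin finite_subset by blast
qed

lemma long_path_blocked:
  assumes P: "rpath F p m" and long: "Mb < m"
  shows "blocked Rh F (p m)"
proof -
  have m0: "0 < m" using long by simp
  have nr: "\<And>j. 0 < j \<Longrightarrow> j \<le> m \<Longrightarrow> \<not> is_root (p j)" using P unfolding rpath_def by blast
  have ed: "\<And>j. j < m \<Longrightarrow> (p j, p (Suc j)) \<in> edges F" using P unfolding rpath_def by blast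
  have pm: "\<not> is_root (p m)" using nr m0 by simp
  show ?thesis
  proof (cases "\<exists>j. 0 < j \<and> j \<le> m \<and> elab F (p (j - 1)) (p j) = {}")
    case True
    define J where "J = Max {j. 0 < j \<and> j \<le> m \<and> elab F (p (j - 1)) (p j) = {}}"
    have finJ: "finite {j. 0 < j \<and> j \<le> m \<and> elab F (p (j - 1)) (p j) = {}}" by simp
    have J: "0 < J \<and> J \<le> m \<and> elab F (p (J - 1)) (p J) = {}"
      unfolding J_def using Max_in[OF finJ] True by blast
    have Jmax: "\<And>j. J < j \<Longrightarrow> j \<le> m \<Longrightarrow> elab F (p (j - 1)) (p j) \<noteq> {}"
      unfolding J_def using Max_ge[OF finJ] by (metis (mono_tags, lifting) leD mem_Collect_eq not_less0 gr_zeroI)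
    have ec: "empty_edge_cond F (p J)" unfolding empty_edge_cond_def
      using ed[of "J - 1"] J by (intro exI[of _ "p (J - 1)"]) auto
    have anc: "p J = p m \<or> ancestor Rh F (p J) (p m)"
    proof (cases "J = m")
      case False
      have "\<And>k. J \<le> k \<Longrightarrow> k < m \<Longrightarrow> is_succ Rh F (p k) (p (Suc k))"
      proof -
        fix k assume k: "J \<le> k" "k < m"
        have "elab F (p k) (p (Suc k)) \<noteq> {}" using Jmax[of "Suc k"] k by simp
        thus "is_succ Rh F (p k) (p (Suc k))" using is_succ_nonempty ed k(2) by blast
      qed
      hence "ancestor Rh F (p J) (p m)" by (rule chain_ancestor) (use J False in auto)
      thus ?thesis by simp
    qed simp
    show ?thesis unfolding blocked_def using pm J nr ec anc by blast
  next
    case False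
    hence ne: "\<And>j. 0 < j \<Longrightarrow> j \<le> m \<Longrightarrow> elab F (p (j - 1)) (p j) \<noteq> {}" by blast
    have succ: "is_succ Rh F (p k) (p (Suc k))" if k: "k < m" for k
    proof -
      have "elab F (p k) (p (Suc k)) \<noteq> {}" using ne[of "Suc k"] k by simp
      thus ?thesis using is_succ_nonempty ed k by blast
    qed
    define g where "g j = (lab F (p (j - 1)), lab F (p j), elab F (p (j - 1)) (p j))" for j
    have gin: "g ` {1..m} \<subseteq> Pow CLs \<times> Pow CLs \<times> Pow RL" unfolding g_def by (auto intro: subsetD[OF I_lab] subsetD[OF I_elab])
    have "\<not> inj_on g {1..m}"
    proof
      assume "inj_on g {1..m}"
      hence "card {1..m} \<le> card (Pow CLs \<times> Pow CLs \<times> Pow RL)"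
        using card_inj_on_le[OF _ gin] finCL finRL by auto
      thus False using long unfolding Mb_def by simp
    qed
    then obtain i j where ij: "i \<in> {1..m}" "j \<in> {1..m}" "i \<noteq> j" "g i = g j" unfolding inj_on_def by blast
    have "\<exists>i j. 1 \<le> i \<and> i < j \<and> j \<le> m \<and> g i = g j"
    proof (cases "i < j")
      case True then show ?thesis using ij by auto
    next
      case False then show ?thesis using ij by (intro exI[of _ j] exI[of _ i]) auto
    qed
    then obtain i j where ij: "1 \<le> i" "i < j" "j \<le> m" "g i = g j" by blast
    have eq: "lab F (p (i - 1)) = lab F (p (j - 1))" "lab F (p i) = lab F (p j)"
       "elab F (p (i - 1)) (p i) = elab F (p (j - 1)) (p j)" using ij(4) unfolding g_def by auto
    have A: "\<And>a b. a < b \<Longrightarrow> b \<le> m \<Longrightarrow> ancestor Rh F (p a) (p b)"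
      using chain_ancestor succ by (metis less_le_trans)
    have jm1: "Suc (j - 1) = j" "Suc (i - 1) = i" using ij by auto
    have db: "dblock_cond Rh F (p j)" unfolding dblock_cond_def
    proof (intro exI conjI)
      show "ancestor Rh F (p (j - 1)) (p j)" using A[of "j - 1" j] ij by simp
      show "ancestor Rh F (p i) (p j)" using A ij by simp
      show "ancestor Rh F (p (i - 1)) (p j)" using A[of "i - 1" j] ij by simp
      show "\<not> is_root (p i)" using nr ij by simp
      show "is_succ Rh F (p (j - 1)) (p j)" using succ[of "j - 1"] jm1 ij by simp
      show "is_succ Rh F (p (i - 1)) (p i)" using succ[of "i - 1"] jm1 ij by simp
    qed (use eq in auto)
    have anc: "p j = p m \<or> ancestor Rh F (p j) (p m)"
      using A[of j m] ij(3) by (cases "j = m") auto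
    show ?thesis unfolding blocked_def using pm nr ij db anc by (intro conjI exI[of _ "p j"]) auto
  qed
qed

end
end

context tab begin

definition "alive F = {r \<in> R0. \<not> deadroot F r}"
definition "markedS F = {v. marked F v}"
definition "labsum F = (\<Sum>v\<in>nodes F. card (lab F v))"

lemma nbr_edge: "nbr Rh F x y S \<Longrightarrow> (x, y) \<in> edges F \<or> (y, x) \<in> edges F"
  unfolding nbr_def succ_r_def by auto

lemma deadroot_nbr: "nbr Rh F x y S \<Longrightarrow> \<not> deadroot F y"
  using nbr_edge unfolding deadroot_def by blast

lemma INVI:
  assumes "finite (nodes F)" "edges F \<subseteq> nodes F \<times> nodes F"
  "\<forall>v\<in>nodes F. is_root v \<longrightarrow> v \<in> R0" "R0 \<subseteq> nodes F"
  "\<forall>v. lab F v \<subseteq> CLs" "\<forall>u v. elab F u v \<subseteq> RL" "sym (neqr F)"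
  "\<forall>u v. (u, v) \<in> edges F \<longrightarrow> is_root v \<longrightarrow> is_root u"
  "\<forall>u u' v. (u, v) \<in> edges F \<longrightarrow> (u', v) \<in> edges F \<longrightarrow> \<not> is_root v \<longrightarrow> u = u'"
  "acyclic (NE F)"
  "\<forall>x. \<not> is_root x \<longrightarrow> card (children F x) \<le> SW F x"
  "(\<Sum>r\<in>R0. card (children F r)) \<le> (\<Sum>r\<in>R0. SW F r)"
  "\<forall>v\<in>nodes F. \<not> is_root v \<longrightarrow> (\<exists>p m. m \<le> Suc Mb \<and> rpath F p m \<and> p m = v)"
  shows "INV F"
  unfolding INV_def by (intro conjI; fact assms)

lemma INV_samestruct:
  assumes I: "INV F"
    and n: "nodes F' = nodes F" and e: "edges F' = edges F" and el: "elab F' = elab F" and nq: "neqr F' = neqr F"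
    and l: "\<And>v. lab F' v \<subseteq> CLs"
    and S: "\<And>x D. Sat' Rh F x D \<Longrightarrow> Sat' Rh F' x D"
  shows "INV F'"
proof -
  have ch: "children F' = children F" unfolding children_def using e by simp
  have rp: "rpath F' = rpath F" unfolding rpath_def[abs_def] using n e by simp
  have ne: "NE F' = NE F" unfolding NE_def using e by simp
  have sw: "SW F x \<le> SW F' x" for x using SW_mono S by blast
  have "(\<Sum>r\<in>R0. card (children F' r)) \<le> (\<Sum>r\<in>R0. SW F r)" using ch I_chR[OF I] by simp
  also have "\<dots> \<le> (\<Sum>r\<in>R0. SW F' r)" by (rule sum_mono) (rule sw)
  finally have chR: "(\<Sum>r\<in>R0. card (children F' r)) \<le> (\<Sum>r\<in>R0. SW F' r)" .
  have chx: "\<not> is_root x \<Longrightarrow> card (children F' x) \<le> SW F' x" for x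
    using ch I_ch[OF I, of x] sw[of x] by simp
  show ?thesis
  proof (rule INVI)
    show "finite (nodes F')" using I_fin[OF I] n by simp
    show "edges F' \<subseteq> nodes F' \<times> nodes F'" using I_edges[OF I] n e by auto
    show "\<forall>v\<in>nodes F'. is_root v \<longrightarrow> v \<in> R0" using I_roots[OF I] n by auto
    show "R0 \<subseteq> nodes F'" using I_R0[OF I] n by auto
    show "\<forall>v. lab F' v \<subseteq> CLs" using l by auto
    show "\<forall>u v. elab F' u v \<subseteq> RL" using I_elab[OF I] el by auto
    show "sym (neqr F')" using I_sym[OF I] nq by auto
    show "\<forall>u v. (u, v) \<in> edges F' \<longrightarrow> is_root v \<longrightarrow> is_root u" using I_rootin[OF I] e by auto
    show "\<forall>u u' v. (u, v) \<in> edges F' \<longrightarrow> (u', v) \<in> edges F' \<longrightarrow> \<not> is_root v \<longrightarrow> u = u'"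
      using I_par[OF I] e by auto
    show "acyclic (NE F')" using I_acyc[OF I] ne by auto
    show "\<forall>x. \<not> is_root x \<longrightarrow> card (children F' x) \<le> SW F' x" using chx by auto
    show "(\<Sum>r\<in>R0. card (children F' r)) \<le> (\<Sum>r\<in>R0. SW F' r)" by (rule chR)
    show "\<forall>v\<in>nodes F'. \<not> is_root v \<longrightarrow> (\<exists>p m. m \<le> Suc Mb \<and> rpath F' p m \<and> p m = v)"
      using I_path[OF I] n rp by auto
  qed
qed

lemma add_lab_facts:
  assumes I: "INV F" and y: "y \<in> nodes F" and Cs: "Cs \<subseteq> CLs" and nd: "\<not> deadroot F y"
    and F': "F' = add_lab F y Cs"
  shows "INV F' \<and> (\<forall>x D. Sat' Rh F x D \<longrightarrow> Sat' Rh F' x D) \<and> nodes F' = nodes F \<and> alive F' = alive F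
     \<and> markedS F' = markedS F \<and> (\<not> Cs \<subseteq> lab F y \<longrightarrow> labsum F < labsum F')"
proof -
  have n: "nodes F' = nodes F" and e: "edges F' = edges F" and el: "elab F' = elab F" and nq: "neqr F' = neqr F"
    and lb: "lab F' = (lab F)(y := lab F y \<union> Cs)"
    using F' unfolding add_lab_def by auto
  have nb: "nbr Rh F' = nbr Rh F" unfolding nbr_def[abs_def] succ_r_def using e el by simp
  have mk: "marked F' = marked F" unfolding marked_def[abs_def] empty_edge_cond_def using e el by simp
  have dr: "deadroot F' x \<longleftrightarrow> deadroot F x" for x
    using nd unfolding deadroot_def lb e by auto
  have S: "Sat' Rh F x D \<Longrightarrow> Sat' Rh F' x D" for x D
  proof -
    assume "Sat' Rh F x D"
    moreover have "Sat Rh F x D \<Longrightarrow> Sat Rh F' x D"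
      by (rule Sat_transfer[where \<psi> = id]) (use nb lb nq I_sym[OF I] in auto)
    ultimately show ?thesis by (auto simp: Sat'_def mk dr)
  qed
  have l: "lab F' v \<subseteq> CLs" for v using I_lab[OF I] Cs lb by auto
  have inv: "INV F'" by (rule INV_samestruct[OF I n e el nq l S])
  have al: "alive F' = alive F" unfolding alive_def using dr by simp
  have ms: "markedS F' = markedS F" unfolding markedS_def using mk by simp
  have ls: "labsum F < labsum F'" if nc: "\<not> Cs \<subseteq> lab F y"
  proof -
    have fin: "finite (nodes F)" using I_fin[OF I] .
    have "labsum F = (\<Sum>v\<in>nodes F. card (lab F v))" unfolding labsum_def ..
    also have "\<dots> < (\<Sum>v\<in>nodes F. card (lab F' v))"
    proof (rule sum_strict_mono_ex1[OF fin])
      show "\<forall>v\<in>nodes F. card (lab F v) \<le> card (lab F' v)"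
      proof
        fix v
        have "lab F v \<subseteq> lab F' v" using lb by auto
        thus "card (lab F v) \<le> card (lab F' v)" using finite_subset[OF l finCL] by (rule card_mono[rotated])
      qed
      show "\<exists>v\<in>nodes F. card (lab F v) < card (lab F' v)"
        using y nc finite_subset[OF l finCL, of y] lb by (intro bexI[of _ y] psubset_card_mono) auto
    qed
    also have "\<dots> = labsum F'" unfolding labsum_def n ..
    finally show ?thesis .
  qed
  show ?thesis using inv S n al ms ls by blast
qed


definition "labres F F' \<longleftrightarrow> INV F' \<and> nodes F' = nodes F \<and> alive F' = alive F \<and> markedS F' = markedS F \<and> labsum F < labsum F'"

lemma add_lab_res:
  assumes I: "INV F" and y: "y \<in> nodes F" and Cs: "Cs \<subseteq> CLs" and nd: "\<not> deadroot F y"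
    and F': "F' = add_lab F y Cs" and nc: "\<not> Cs \<subseteq> lab F y"
  shows "labres F F'"
  using add_lab_facts[OF I y Cs nd F'] nc unfolding labres_def by blast

lemma nbr_node: "INV F \<Longrightarrow> nbr Rh F x y S \<Longrightarrow> y \<in> nodes F"
  using nbr_edge I_edges by blast

lemma and_res: "INV F \<Longrightarrow> and_rule Rh F F' \<Longrightarrow> labres F F'"
proof -
  assume I: "INV F" and "and_rule Rh F F'"
  then obtain x C1 C2 where x: "x \<in> nodes F" "CAnd C1 C2 \<in> lab F x" "\<not> {C1, C2} \<subseteq> lab F x"
    "F' = add_lab F x {C1, C2}" unfolding and_rule_def by blast
  have "CAnd C1 C2 \<in> CLs" using x(2) I_lab[OF I] by blast
  hence "{C1, C2} \<subseteq> CLs" by (auto dest: CL_and)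
  moreover have "\<not> deadroot F x" using x(2) unfolding deadroot_def by auto
  ultimately show ?thesis using add_lab_res[OF I x(1)] x by blast
qed

lemma or_res: "INV F \<Longrightarrow> or_rule Rh F F' \<Longrightarrow> labres F F'"
proof -
  assume I: "INV F" and "or_rule Rh F F'"
  then obtain x C1 C2 where x: "x \<in> nodes F" "COr C1 C2 \<in> lab F x" "{C1, C2} \<inter> lab F x = {}"
    "F' = add_lab F x {C1} \<or> F' = add_lab F x {C2}" unfolding or_rule_def by blast
  have "COr C1 C2 \<in> CLs" using x(2) I_lab[OF I] by blast
  hence c: "{C1} \<subseteq> CLs" "{C2} \<subseteq> CLs" by (auto dest: CL_or)
  have nd: "\<not> deadroot F x" using x(2) unfolding deadroot_def by auto
  have n: "\<not> {C1} \<subseteq> lab F x" "\<not> {C2} \<subseteq> lab F x" using x(3) by auto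
  from x(4) show ?thesis
  proof
    assume "F' = add_lab F x {C1}" then show ?thesis using add_lab_res[OF I x(1) c(1) nd] n by blast
  next
    assume "F' = add_lab F x {C2}" then show ?thesis using add_lab_res[OF I x(1) c(2) nd] n by blast
  qed
qed

lemma all_res: "INV F \<Longrightarrow> all_rule Rh F F' \<Longrightarrow> labres F F'"
proof -
  assume I: "INV F" and "all_rule Rh F F'"
  then obtain x S C y where x: "x \<in> nodes F" "CAll S C \<in> lab F x" "nbr Rh F x y S" "C \<notin> lab F y"
    "F' = add_lab F y {C}" unfolding all_rule_def by blast
  have "CAll S C \<in> CLs" using x(2) I_lab[OF I] by blast
  hence "{C} \<subseteq> CLs" by (auto dest: CL_all)
  moreover have "\<not> deadroot F y" using deadroot_nbr x(3) by blast
  moreover have "y \<in> nodes F" using nbr_node[OF I x(3)] .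
  ultimately show ?thesis using add_lab_res[OF I] x by blast
qed

lemma allp_res: "INV F \<Longrightarrow> all_plus_rule Tr Rh F F' \<Longrightarrow> labres F F'"
proof -
  assume I: "INV F" and "all_plus_rule Tr Rh F F'"
  then obtain x S C R y where x: "x \<in> nodes F" "CAll S C \<in> lab F x" "subrole Rh R S" "nbr Rh F x y R"
    "CAll R C \<notin> lab F y" "F' = add_lab F y {CAll R C}" unfolding all_plus_rule_def by blast
  have "CAll S C \<in> CLs" using x(2) I_lab[OF I] by blast
  hence "{CAll R C} \<subseteq> CLs" using x(3) by (auto intro: CL_allplus)
  moreover have "\<not> deadroot F y" using deadroot_nbr x(4) by blast
  moreover have "y \<in> nodes F" using nbr_node[OF I x(4)] .
  ultimately show ?thesis using add_lab_res[OF I] x by blast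
qed

lemma choose_res: "INV F \<Longrightarrow> choose_rule A0 Rh F F' \<Longrightarrow> labres F F'"
proof -
  assume I: "INV F" and "choose_rule A0 Rh F F'"
  then obtain x n S C y where x: "x \<in> nodes F" "CAtMost n S C \<in> lab F x \<or> CAtLeast n S C \<in> lab F x"
    "nbr Rh F x y S" "{C, sim A0 C} \<inter> lab F y = {}"
    "F' = add_lab F y {C} \<or> F' = add_lab F y {sim A0 C}" unfolding choose_rule_def by blast
  have X: "CAtMost n S C \<in> CLs \<or> CAtLeast n S C \<in> CLs" using x(2) I_lab[OF I] by blast
  have c1: "{C} \<subseteq> CLs" using X by (auto dest: CL_atmost CL_atleast)
  have c2: "{sim A0 C} \<subseteq> CLs" using X by (auto intro: CL_sim[OF nnfAb])
  have nd: "\<not> deadroot F y" using deadroot_nbr x(3) by blast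
  have y: "y \<in> nodes F" using nbr_node[OF I x(3)] .
  have n: "\<not> {C} \<subseteq> lab F y" "\<not> {sim A0 C} \<subseteq> lab F y" using x(4) by auto
  from x(5) show ?thesis
  proof
    assume "F' = add_lab F y {C}" then show ?thesis using add_lab_res[OF I y c1 nd] n by blast
  next
    assume "F' = add_lab F y {sim A0 C}" then show ?thesis using add_lab_res[OF I y c2 nd] n by blast
  qed
qed

end

definition addch :: "('i, 'c, 'r) forest \<Rightarrow> 'i node \<Rightarrow> 'i node set \<Rightarrow> ('c, 'r) concept \<Rightarrow> 'r role
    \<Rightarrow> ('i node \<times> 'i node) set \<Rightarrow> ('i, 'c, 'r) forest" where
  "addch F x N C0 S0 Q = F\<lparr>nodes := nodes F \<union> N, edges := edges F \<union> {x} \<times> N,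
     lab := \<lambda>v. if v \<in> N then {C0} else lab F v,
     elab := \<lambda>u v. if u = x \<and> v \<in> N then {S0} else elab F u v,
     neqr := neqr F \<union> Q\<rparr>"

lemma rpath_mono: "rpath F p m \<Longrightarrow> nodes F \<subseteq> nodes F' \<Longrightarrow> edges F \<subseteq> edges F' \<Longrightarrow> rpath F' p m"
  unfolding rpath_def by blast

context tab begin

lemma sum_bump:
  fixes g h :: "'a \<Rightarrow> nat"
  assumes "finite A" "x \<in> A" "\<And>r. r \<in> A \<Longrightarrow> r \<noteq> x \<Longrightarrow> g r \<le> h r" "g x \<le> h x + c"
  shows "sum g A \<le> sum h A + c"
proof -
  have "sum g A = g x + sum g (A - {x})" using assms(1,2) by (simp add: sum.remove)
  also have "\<dots> \<le> (h x + c) + sum h (A - {x})" using assms(3,4) by (intro add_mono sum_mono) auto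
  also have "\<dots> = sum h A + c" using assms(1,2) by (simp add: sum.remove)
  finally show ?thesis .
qed

lemma addch_res:
  assumes I: "INV F"
    and n': "nodes F' = nodes F \<union> N" and e': "edges F' = edges F \<union> {x} \<times> N"
    and l': "lab F' = (\<lambda>v. if v \<in> N then {Cz} else lab F v)"
    and el': "elab F' = (\<lambda>u v. if u = x \<and> v \<in> N then {Sz} else elab F u v)"
    and q': "neqr F' = neqr F \<union> Q"
    and x: "x \<in> nodes F" and nb: "\<not> blocked Rh F x"
    and N: "finite N" "N \<inter> nodes F = {}" "\<And>v. v \<in> N \<Longrightarrow> \<not> is_root v" "N \<noteq> {}"
    and Q: "Q \<subseteq> N \<times> N" "sym Q"
    and Cz: "Cz \<in> CLs" and Sz: "Sz \<in> RL"
    and Dz: "Dz \<in> CLs" "Dz \<in> lab F x" "wt Dz = card N" "\<not> Sat Rh F x Dz" "Sat Rh F' x Dz"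
  shows "INV F' \<and> card (nodes F) < card (nodes F')"
proof -
  have xN: "x \<notin> N" using x N(2) by blast
  have noE: "\<And>u v. (u, v) \<in> edges F \<Longrightarrow> u \<notin> N \<and> v \<notin> N" using I_edges[OF I] N(2) by blast
  have elsame: "\<And>u v. (u, v) \<in> edges F \<Longrightarrow> elab F' u v = elab F u v" using noE el' by auto
  have nbr_mono: "nbr Rh F a b R \<Longrightarrow> nbr Rh F' a b R" for a b R
    unfolding nbr_def succ_r_def using elsame e' by auto
  have lsame: "v \<in> nodes F \<Longrightarrow> lab F' v = lab F v" for v using l' N(2) by auto
  have mk: "marked F v \<Longrightarrow> marked F' v" for v
    unfolding marked_def empty_edge_cond_def using e' elsame by auto
  have dr: "deadroot F v \<Longrightarrow> deadroot F' v" for v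
  proof -
    assume d: "deadroot F v"
    hence "v \<notin> N" using N(3) unfolding deadroot_def by auto
    moreover have "v \<noteq> x" using d Dz(2) unfolding deadroot_def by auto
    ultimately show ?thesis using d unfolding deadroot_def e' l' by auto
  qed
  have S: "Sat' Rh F v D \<Longrightarrow> Sat' Rh F' v D" for v D
  proof -
    assume "Sat' Rh F v D"
    moreover have "Sat Rh F v D \<Longrightarrow> Sat Rh F' v D"
    proof (rule Sat_transfer[where \<psi> = id])
      show "\<And>w S. nbr Rh F v w S \<Longrightarrow> nbr Rh F' v (id w) S" using nbr_mono by simp
      show "\<And>w S. nbr Rh F v w S \<Longrightarrow> lab F w \<subseteq> lab F' (id w)" using lsame nbr_node[OF I] by simp
      show "\<And>a b. (a, b) \<in> neqr F \<Longrightarrow> a \<noteq> b \<Longrightarrow> (id a, id b) \<in> neqr F' \<and> id a \<noteq> id b" using q' by simp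
      show "sym (neqr F)" using I_sym[OF I] .
    qed
    ultimately show ?thesis unfolding Sat'_def using mk dr by blast
  qed
  have swm: "SW F v \<le> SW F' v" for v by (rule SW_mono) (rule S)
  have nmx: "\<not> marked F x" using nb unfolding blocked_def marked_def by blast
  have ndx: "\<not> deadroot F x" using Dz(2) unfolding deadroot_def by auto
  have Sx: "SW F x + wt Dz \<le> SW F' x"
    by (rule SW_mono_new[OF S Dz(1)]) (use Dz(4,5) nmx ndx in \<open>auto simp: Sat'_def\<close>)
  have chx: "children F' x = children F x \<union> N" unfolding children_def using e' N(3) by auto
  have cho: "v \<noteq> x \<Longrightarrow> children F' v = children F v" for v unfolding children_def using e' by auto
  have disj: "children F x \<inter> N = {}" using N(2) finite_children[OF I] unfolding children_def using I_edges[OF I] by blast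
  have cardx: "card (children F' x) = card (children F x) + card N"
    using chx disj finite_children[OF I] N(1) by (simp add: card_Un_disjoint)
  have chI: "\<forall>v. \<not> is_root v \<longrightarrow> card (children F' v) \<le> SW F' v"
  proof (intro allI impI)
    fix v :: "'i node" assume v: "\<not> is_root v"
    show "card (children F' v) \<le> SW F' v"
    proof (cases "v = x")
      case True
      then show ?thesis using cardx I_ch[OF I v] Sx Dz(3) by simp
    next
      case False
      then show ?thesis using cho I_ch[OF I v] swm[of v] by simp
    qed
  qed
  have finR0: "finite R0" using I_R0[OF I] I_fin[OF I] finite_subset by blast
  have chR: "(\<Sum>r\<in>R0. card (children F' r)) \<le> (\<Sum>r\<in>R0. SW F' r)"
  proof (cases "x \<in> R0")
    case True
    have "(\<Sum>r\<in>R0. card (children F' r)) \<le> (\<Sum>r\<in>R0. card (children F r)) + card N"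
      by (rule sum_bump[OF finR0 True]) (use cho cardx in auto)
    also have "\<dots> \<le> (\<Sum>r\<in>R0. SW F r) + card N" using I_chR[OF I] by simp
    also have "\<dots> \<le> (\<Sum>r\<in>R0. SW F' r)"
    proof -
      have "(\<Sum>r\<in>R0. SW F r) + card N = SW F x + card N + (\<Sum>r\<in>R0 - {x}. SW F r)"
        using finR0 True by (simp add: sum.remove)
      also have "\<dots> \<le> SW F' x + (\<Sum>r\<in>R0 - {x}. SW F' r)"
        using Sx Dz(3) swm by (intro add_mono sum_mono) auto
      also have "\<dots> = (\<Sum>r\<in>R0. SW F' r)" using finR0 True by (simp add: sum.remove)
      finally show ?thesis .
    qed
    finally show ?thesis .
  next
    case False
    have "(\<Sum>r\<in>R0. card (children F' r)) = (\<Sum>r\<in>R0. card (children F r))"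
      using False by (intro sum.cong refl) (metis cho)
    also have "\<dots> \<le> (\<Sum>r\<in>R0. SW F r)" using I_chR[OF I] .
    also have "\<dots> \<le> (\<Sum>r\<in>R0. SW F' r)" using swm by (intro sum_mono) auto
    finally show ?thesis .
  qed
  have acyc: "acyclic (NE F')"
  proof -
    have "NE F' \<subseteq> NE F \<union> {x} \<times> N" unfolding NE_def using e' by auto
    moreover have "acyclic (NE F \<union> {x} \<times> N)"
    proof (rule acyclic_add_fresh[OF I_acyc[OF I]])
      show "\<And>t. t \<in> N \<Longrightarrow> t \<notin> Domain (NE F)" unfolding NE_def using noE by auto
      show "\<And>a b. (a, b) \<in> {x} \<times> N \<Longrightarrow> b \<in> N \<and> a \<notin> N" using xN by auto
    qed
    ultimately show ?thesis using acyclic_subset by blast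
  qed
  have paths: "\<forall>v\<in>nodes F'. \<not> is_root v \<longrightarrow> (\<exists>p m. m \<le> Suc Mb \<and> rpath F' p m \<and> p m = v)"
  proof (intro ballI impI)
    fix v assume v: "v \<in> nodes F'" "\<not> is_root v"
    show "\<exists>p m. m \<le> Suc Mb \<and> rpath F' p m \<and> p m = v"
    proof (cases "v \<in> N")
      case False
      hence "v \<in> nodes F" using v n' by auto
      then obtain p m where "m \<le> Suc Mb" "rpath F p m" "p m = v" using I_path[OF I] v(2) by blast
      moreover have "rpath F' p m" by (rule rpath_mono[OF \<open>rpath F p m\<close>]) (use n' e' in auto)
      ultimately show ?thesis by blast
    next
      case True
      show ?thesis
      proof (cases "is_root x")
        case True
        let ?p = "\<lambda>j. if j = 0 then x else v"
        have "rpath F' ?p 1" unfolding rpath_def using True x n' e' \<open>v \<in> N\<close> v(2) by auto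
        thus ?thesis by (intro exI[of _ ?p] exI[of _ 1]) auto
      next
        case False
        then obtain p m where pm: "m \<le> Suc Mb" "rpath F p m" "p m = x" using I_path[OF I] x by blast
        have "m \<le> Mb"
        proof (rule ccontr)
          assume "\<not> m \<le> Mb"
          hence "blocked Rh F (p m)" using long_path_blocked[OF I pm(2)] by simp
          thus False using nb pm(3) by simp
        qed
        let ?p = "p(Suc m := v)"
        have "rpath F' ?p (Suc m)"
          using pm(2) unfolding rpath_def
        proof (intro conjI allI impI)
          assume r: "p 0 \<in> nodes F \<and> is_root (p 0) \<and> (\<forall>j. 0 < j \<and> j \<le> m \<longrightarrow> \<not> is_root (p j))
              \<and> (\<forall>j<m. (p j, p (Suc j)) \<in> edges F)"
          show "?p 0 \<in> nodes F'" "is_root (?p 0)" using r n' by auto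
          fix j
          show "0 < j \<and> j \<le> Suc m \<Longrightarrow> \<not> is_root (?p j)" using r v(2) by (cases "j = Suc m") auto
          assume j: "j < Suc m"
          show "(?p j, ?p (Suc j)) \<in> edges F'"
          proof (cases "j = m")
            case True then show ?thesis using pm(3) e' \<open>v \<in> N\<close> by auto
          next
            case False then show ?thesis using r j e' by auto
          qed
        qed
        thus ?thesis using \<open>m \<le> Mb\<close> by (intro exI[of _ ?p] exI[of _ "Suc m"]) auto
      qed
    qed
  qed
  have inv: "INV F'"
  proof (rule INVI)
    show "finite (nodes F')" using I_fin[OF I] N(1) n' by simp
    show "edges F' \<subseteq> nodes F' \<times> nodes F'" using I_edges[OF I] x n' e' by auto
    show "\<forall>v\<in>nodes F'. is_root v \<longrightarrow> v \<in> R0" using I_roots[OF I] N(3) n' by auto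
    show "R0 \<subseteq> nodes F'" using I_R0[OF I] n' by auto
    show "\<forall>v. lab F' v \<subseteq> CLs" using I_lab[OF I] Cz l' by auto
    show "\<forall>u v. elab F' u v \<subseteq> RL" using I_elab[OF I] Sz el' by auto
    show "sym (neqr F')" using I_sym[OF I] Q(2) q' unfolding sym_def by auto
    show "\<forall>u v. (u, v) \<in> edges F' \<longrightarrow> is_root v \<longrightarrow> is_root u" using I_rootin[OF I] N(3) e' by auto
    show "\<forall>u u' v. (u, v) \<in> edges F' \<longrightarrow> (u', v) \<in> edges F' \<longrightarrow> \<not> is_root v \<longrightarrow> u = u'"
      using I_par[OF I] noE e' by auto
    show "acyclic (NE F')" by (rule acyc)
    show "\<forall>x. \<not> is_root x \<longrightarrow> card (children F' x) \<le> SW F' x" by (rule chI)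
    show "(\<Sum>r\<in>R0. card (children F' r)) \<le> (\<Sum>r\<in>R0. SW F' r)" by (rule chR)
    show "\<forall>v\<in>nodes F'. \<not> is_root v \<longrightarrow> (\<exists>p m. m \<le> Suc Mb \<and> rpath F' p m \<and> p m = v)" by (rule paths)
  qed
  have "card (nodes F) < card (nodes F')"
    using n' N I_fin[OF I] by (simp add: card_Un_disjoint Int_commute card_gt_0_iff)
  thus ?thesis using inv by blast
qed


lemma ex_res:
  assumes I: "INV F" and r: "ex_rule Rh F F'"
  shows "INV F' \<and> card (nodes F) < card (nodes F')"
proof -
  obtain x S C k where x: "x \<in> nodes F" "CEx S C \<in> lab F x" "\<not> blocked Rh F x"
     "\<not> (\<exists>y. nbr Rh F x y S \<and> C \<in> lab F y)" "New k \<notin> nodes F"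
     and F': "F' = F\<lparr>nodes := insert (New k) (nodes F), edges := insert (x, New k) (edges F),
               lab := (lab F)(New k := {C}), elab := (elab F)(x := (elab F x)(New k := {S}))\<rparr>"
    using r unfolding ex_rule_def by blast
  have D: "CEx S C \<in> CLs" using x(2) I_lab[OF I] by blast
  have C: "C \<in> CLs" using CL_ex[OF D] .
  have S: "S \<in> RL" using D unfolding RLs_def RX_def by blast
  show ?thesis
  proof (rule addch_res[OF I _ _ _ _ _ x(1,3), where N = "{New k}" and Q = "{}" and Cz = C and Sz = S and Dz = "CEx S C"])
    show "nodes F' = nodes F \<union> {New k}" using F' by simp
    show "edges F' = edges F \<union> {x} \<times> {New k}" using F' by simp
    show "lab F' = (\<lambda>v. if v \<in> {New k} then {C} else lab F v)" using F' by auto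
    show "elab F' = (\<lambda>u v. if u = x \<and> v \<in> {New k} then {S} else elab F u v)" using F' by (auto simp: fun_eq_iff)
    show "neqr F' = neqr F \<union> {}" using F' by simp
    show "Sat Rh F' x (CEx S C)"
    proof -
      have "nbr Rh F' x (New k) S" using F' subrole_refl unfolding nbr_def succ_r_def by fastforce
      moreover have "C \<in> lab F' (New k)" using F' by simp
      ultimately show ?thesis by auto
    qed
  qed (use x D C S in auto)
qed

lemma ge_res:
  assumes I: "INV F" and r: "ge_rule Rh F F'"
  shows "INV F' \<and> card (nodes F) < card (nodes F')"
proof -
  obtain x n S C ks where x: "x \<in> nodes F" "CAtLeast n S C \<in> lab F x" "\<not> blocked Rh F x"
     "\<not> (\<exists>ys. (\<forall>i<n. nbr Rh F x (ys i) S \<and> C \<in> lab F (ys i))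
              \<and> (\<forall>i j. i < j \<and> j < n \<longrightarrow> (ys i, ys j) \<in> neqr F))"
     "inj_on ks {..<n}" "\<forall>i<n. New (ks i) \<notin> nodes F"
     and F': "F' = F\<lparr>nodes := nodes F \<union> {New (ks i) | i. i < n},
               edges := edges F \<union> {(x, New (ks i)) | i. i < n},
               lab := (\<lambda>v. if (\<exists>i<n. v = New (ks i)) then {C} else lab F v),
               elab := (\<lambda>u v. if u = x \<and> (\<exists>i<n. v = New (ks i)) then {S} else elab F u v),
               neqr := neqr F \<union> {(New (ks i), New (ks j)) | i j. i < n \<and> j < n \<and> i \<noteq> j}\<rparr>"
    using r unfolding ge_rule_def by blast
  let ?N = "{New (ks i) | i. i < n}"
  let ?Q = "{(New (ks i), New (ks j)) | i j. i < n \<and> j < n \<and> i \<noteq> j}"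
  have n0: "n \<noteq> 0" using x(4) by auto
  have D: "CAtLeast n S C \<in> CLs" using x(2) I_lab[OF I] by blast
  have C: "C \<in> CLs" using CL_atleast[OF D] .
  have S: "S \<in> RL" using D unfolding RLs_def RX_def by blast
  have Neq: "?N = (\<lambda>i. New (ks i)) ` {..<n}" by auto
  have injN: "inj_on (\<lambda>i. New (ks i)) {..<n}" using x(5) unfolding inj_on_def by auto
  have cN: "card ?N = n" unfolding Neq using card_image[OF injN] by simp
  have fN: "finite ?N" unfolding Neq by simp
  show ?thesis
  proof (rule addch_res[OF I _ _ _ _ _ x(1,3), where N = ?N and Q = ?Q and Cz = C and Sz = S and Dz = "CAtLeast n S C"])
    show "nodes F' = nodes F \<union> ?N" using F' by simp
    show "edges F' = edges F \<union> {x} \<times> ?N" using F' by auto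
    show "lab F' = (\<lambda>v. if v \<in> ?N then {C} else lab F v)" using F' by (auto simp: fun_eq_iff)
    show "elab F' = (\<lambda>u v. if u = x \<and> v \<in> ?N then {S} else elab F u v)" using F' by (auto simp: fun_eq_iff)
    show "neqr F' = neqr F \<union> ?Q" using F' by simp
    show "?N \<inter> nodes F = {}" using x(6) by auto
    show "?N \<noteq> {}" using n0 by auto
    show "?Q \<subseteq> ?N \<times> ?N" by auto
    show "sym ?Q" unfolding sym_def by auto
    show "wt (CAtLeast n S C) = card ?N" by (metis cN wt.simps(2))
    show "\<not> Sat Rh F x (CAtLeast n S C)" using x(4) by auto
    show "Sat Rh F' x (CAtLeast n S C)"
    proof -
      have "\<forall>i<n. nbr Rh F' x (New (ks i)) S \<and> C \<in> lab F' (New (ks i))"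
        using F' subrole_refl unfolding nbr_def succ_r_def by fastforce
      moreover have "\<forall>i j. i < j \<and> j < n \<longrightarrow> (New (ks i), New (ks j)) \<in> neqr F'" using F' by fastforce
      ultimately show ?thesis using injN by auto
    qed
  qed (use x D C S fN in auto)
qed

end

lemma le_merge_fields:
  "nodes (le_merge Rh F x y z) = nodes F"
  "edges (le_merge Rh F x y z) = (if ancestor Rh F z x then insert (z, x) (edges F) else insert (x, z) (edges F))"
  "lab (le_merge Rh F x y z) = (lab F)(z := lab F z \<union> lab F y)"
  "neqr (le_merge Rh F x y z) = neqr F \<union> {(u, z) | u. (u, y) \<in> neqr F} \<union> {(z, u) | u. (u, y) \<in> neqr F}"
  "ancestor Rh F z x \<Longrightarrow> elab (le_merge Rh F x y z) = (\<lambda>u v. if u = x \<and> v = y then {}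
      else if u = z \<and> v = x then (if (z, x) \<in> edges F then elab F z x else {}) \<union> inv ` elab F x y else elab F u v)"
  "\<not> ancestor Rh F z x \<Longrightarrow> elab (le_merge Rh F x y z) = (\<lambda>u v. if u = x \<and> v = y then {}
      else if u = x \<and> v = z then (if (x, z) \<in> edges F then elab F x z else {}) \<union> elab F x y else elab F u v)"
  by (auto simp: le_merge_def Let_def add_lab_def add_elab_def fun_eq_iff)

lemma sym_merge: "sym N \<Longrightarrow> sym (N \<union> {(u, z) | u. (u, y) \<in> N} \<union> {(z, u) | u. (u, y) \<in> N})"
  unfolding sym_def by auto

context tab begin

lemma le_res:
  assumes I: "INV F" and r: "le_rule Rh F F'"
  shows "INV F' \<and> nodes F' = nodes F \<and> alive F' = alive F \<and> markedS F \<subset> markedS F'"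
proof -
  obtain x n S C y z where x: "x \<in> nodes F" "CAtMost n S C \<in> lab F x" "\<not> indirectly_blocked Rh F x"
     "nbr Rh F x y S" "nbr Rh F x z S" "y \<noteq> z" "(y, z) \<notin> neqr F" "\<not> is_root y" "\<not> ancestor Rh F y z"
     "C \<in> lab F y" "C \<in> lab F z" and F': "F' = le_merge Rh F x y z"
    using r unfolding le_rule_def by blast
  let ?E = "edges F"
  let ?anc = "ancestor Rh F z x"
  have i7: "\<And>u v. (u, v) \<in> ?E \<Longrightarrow> is_root v \<Longrightarrow> is_root u" using I_rootin[OF I] by blast
  have f1: "\<not> empty_edge_cond F x" using x(3) unfolding indirectly_blocked_def by blast
  have f2: "(y, x) \<notin> ?E"
  proof
    assume yx: "(y, x) \<in> ?E"
    hence xnr: "\<not> is_root x" using i7 x(8) by blast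
    have "elab F y x \<noteq> {}" using f1 yx unfolding empty_edge_cond_def by blast
    hence sy: "is_succ Rh F y x" using is_succ_nonempty yx by blast
    from x(5) show False unfolding nbr_def
    proof
      assume "succ_r Rh F x z S"
      hence "is_succ Rh F x z" unfolding is_succ_def by blast
      hence "ancestor Rh F y z" using sy unfolding ancestor_def
        by (intro trancl_into_trancl2[of y x]) auto
      thus False using x(9) by blast
    next
      assume "succ_r Rh F z x (inv S)"
      hence "(z, x) \<in> ?E" unfolding succ_r_def by blast
      hence "z = y" using I_par[OF I yx _ xnr] by blast
      thus False using x(6) by simp
    qed
  qed
  have f3: "succ_r Rh F x y S" using x(4) f2 unfolding nbr_def succ_r_def by blast
  have xy: "(x, y) \<in> ?E" "elab F x y \<noteq> {}" using f3 unfolding succ_r_def by auto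
  have f4: "x \<noteq> y" using xy f2 by auto
  have zn: "z \<in> nodes F" using nbr_node[OF I x(5)] .
  have yn: "y \<in> nodes F" using nbr_node[OF I x(4)] .
  have f5: "?anc \<Longrightarrow> (z, x) \<in> ?E \<or> (is_root x \<and> is_root z)"
  proof (rule ccontr)
    assume anc: ?anc and c: "\<not> ((z, x) \<in> ?E \<or> (is_root x \<and> is_root z))"
    hence "succ_r Rh F x z S" using x(5) unfolding nbr_def succ_r_def by blast
    hence xz: "(x, z) \<in> ?E" unfolding succ_r_def by blast
    show False
    proof (cases "is_root x")
      case True
      have "is_root z" by (rule ancestor_root[OF _ anc True]) (rule i7)
      then show False using True c by blast
    next
      case False
      hence znr: "\<not> is_root z" using i7 xz by blast
      have "(z, x) \<in> (NE F)\<^sup>+" using ancestor_NE[OF i7 anc znr] .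
      moreover have "(x, z) \<in> NE F" using xz False unfolding NE_def by blast
      ultimately have "(z, z) \<in> (NE F)\<^sup>+" by (meson trancl.trancl_into_trancl)
      thus False using I_acyc[OF I] unfolding acyclic_def by blast
    qed
  qed
  have f6: "\<not> ?anc \<Longrightarrow> succ_r Rh F x z S"
  proof -
    assume na: "\<not> ?anc"
    have "\<not> succ_r Rh F z x (inv S)"
    proof
      assume "succ_r Rh F z x (inv S)"
      hence "is_succ Rh F z x" unfolding is_succ_def by blast
      hence ?anc unfolding ancestor_def by blast
      thus False using na by blast
    qed
    thus ?thesis using x(5) unfolding nbr_def by blast
  qed
  have f7: "?anc \<Longrightarrow> (z, x) \<in> ?E \<Longrightarrow> elab F z x \<noteq> {}" using f1 unfolding empty_edge_cond_def by blast
  define e where "e = (if ?anc then (z, x) else (x, z))"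
  define Rs where "Rs = (if ?anc then inv ` elab F x y else elab F x y)"
  have n': "nodes F' = nodes F" unfolding F' by (simp add: le_merge_fields)
  have e': "edges F' = insert e ?E" unfolding e_def F' by (cases ?anc) (simp_all add: le_merge_fields(2))
  have l': "lab F' = (lab F)(z := lab F z \<union> lab F y)" unfolding F' by (simp add: le_merge_fields)
  have q': "neqr F' = neqr F \<union> {(u, z) | u. (u, y) \<in> neqr F} \<union> {(z, u) | u. (u, y) \<in> neqr F}"
    unfolding F' by (simp add: le_merge_fields)
  have exy: "e \<noteq> (x, y)" unfolding e_def using f4 x(6) by auto
  have el': "elab F' = (\<lambda>u v. if (u, v) = (x, y) then {} else if (u, v) = e then
      (if e \<in> ?E then elab F (fst e) (snd e) else {}) \<union> Rs else elab F u v)"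
  proof (cases ?anc)
    case True
    show ?thesis unfolding F' le_merge_fields(5)[OF True] e_def Rs_def using True by (intro ext) auto
  next
    case False
    show ?thesis unfolding F' le_merge_fields(6)[OF False] e_def Rs_def using False by (intro ext) auto
  qed
  have eE: "e \<in> ?E \<or> (is_root (fst e) \<and> is_root (snd e))"
    using f5 f6 unfolding e_def succ_r_def by (cases ?anc) auto
  have ne_e: "e \<notin> ?E \<Longrightarrow> is_root (snd e) \<and> is_root (fst e)" using eE by blast
  have elmono: "(u, v) \<in> ?E \<Longrightarrow> (u, v) \<noteq> (x, y) \<Longrightarrow> elab F u v \<subseteq> elab F' u v" for u v
    using el' by auto
  have lmono: "lab F w \<subseteq> lab F' w" for w using l' by auto
  have nbr_keep: "nbr Rh F a b R \<Longrightarrow> (a, b) \<noteq> (x, y) \<Longrightarrow> (a, b) \<noteq> (y, x) \<Longrightarrow> nbr Rh F' a b R" for a b R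
    unfolding nbr_def succ_r_def using elmono e' by blast
  have nbr_move: "nbr Rh F x y R \<Longrightarrow> nbr Rh F' x z R" for R
  proof -
    assume "nbr Rh F x y R"
    hence "succ_r Rh F x y R" using f2 unfolding nbr_def succ_r_def by blast
    then obtain Q where Q: "Q \<in> elab F x y" "subrole Rh Q R" unfolding succ_r_def by blast
    show ?thesis
    proof (cases ?anc)
      case True
      have "inv Q \<in> elab F' z x" using el' Q(1) True exy unfolding e_def Rs_def by auto
      moreover have "(z, x) \<in> edges F'" using e' True unfolding e_def by simp
      ultimately have "succ_r Rh F' z x (inv R)" unfolding succ_r_def using subrole_inv[OF Q(2)] by blast
      thus ?thesis unfolding nbr_def by blast
    next
      case False
      have "Q \<in> elab F' x z" using el' Q(1) False exy unfolding e_def Rs_def by auto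
      moreover have "(x, z) \<in> edges F'" using e' False unfolding e_def by simp
      ultimately have "succ_r Rh F' x z R" unfolding succ_r_def using Q(2) by blast
      thus ?thesis unfolding nbr_def by blast
    qed
  qed
  have symq: "sym (neqr F)" using I_sym[OF I] .
  have mky: "marked F' y" unfolding marked_def empty_edge_cond_def using x(8) xy(1) e' el' by auto
  have nmx: "\<not> marked F x" using f1 unfolding marked_def by blast
  have ndx: "\<not> deadroot F x" using x(2) unfolding deadroot_def by auto
  have ndz: "\<not> deadroot F z" using x(11) unfolding deadroot_def by auto
  have mk_keep: "marked F v \<Longrightarrow> marked F' v" for v
  proof (cases "v = y")
    case True then show ?thesis using mky by simp
  next
    case False
    assume m: "marked F v"
    then obtain u where u: "(u, v) \<in> ?E" "elab F u v = {}" "\<not> is_root v"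
      unfolding marked_def empty_edge_cond_def by blast
    have "v \<noteq> x" using m nmx by blast
    have "(u, v) \<noteq> e"
    proof
      assume "(u, v) = e"
      thus False using \<open>v \<noteq> x\<close> f6 u(2) unfolding e_def succ_r_def by (cases ?anc) auto
    qed
    hence "elab F' u v = {}" using el' u(2) False by auto
    thus ?thesis using u e' unfolding marked_def empty_edge_cond_def by auto
  qed
  have dr_keep: "deadroot F v \<Longrightarrow> deadroot F' v" for v
  proof -
    assume d: "deadroot F v"
    hence "v \<noteq> x" "v \<noteq> z" using ndx ndz by auto
    thus ?thesis using d unfolding deadroot_def e' l' e_def by auto
  qed
  have dr_back: "deadroot F' v \<Longrightarrow> deadroot F v" for v
    unfolding deadroot_def using e' lmono by blast
  let ?\<psi> = "\<lambda>w. if w = y then z else w"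
  have nq_move: "(a, b) \<in> neqr F \<Longrightarrow> a \<noteq> b \<Longrightarrow> (?\<psi> a, ?\<psi> b) \<in> neqr F' \<and> ?\<psi> a \<noteq> ?\<psi> b" for a b
  proof -
    assume ab: "(a, b) \<in> neqr F" "a \<noteq> b"
    have ba: "(b, a) \<in> neqr F" using ab symq unfolding sym_def by blast
    have ne: "?\<psi> a \<noteq> ?\<psi> b"
    proof
      assume "?\<psi> a = ?\<psi> b"
      hence "(a = y \<and> b = z) \<or> (a = z \<and> b = y)" using ab(2) by (auto split: if_splits)
      thus False using ab ba x(7) by auto
    qed
    have "(?\<psi> a, ?\<psi> b) \<in> neqr F'" using ab ba q' by auto
    thus ?thesis using ne by blast
  qed
  have S: "Sat' Rh F v D \<Longrightarrow> Sat' Rh F' v D" for v D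
  proof -
    assume sv: "Sat' Rh F v D"
    consider "v = y" | "v = x" | "v \<noteq> x" "v \<noteq> y" by blast
    then show ?thesis
    proof cases
      case 1 then show ?thesis using mky unfolding Sat'_def by blast
    next
      case 2
      hence "Sat Rh F x D" using sv nmx ndx unfolding Sat'_def by blast
      hence "Sat Rh F' x D"
      proof (rule Sat_transfer[where \<psi> = ?\<psi>, rotated -1])
        show "\<And>w R. nbr Rh F x w R \<Longrightarrow> nbr Rh F' x (?\<psi> w) R"
        proof -
          fix w R assume "nbr Rh F x w R"
          thus "nbr Rh F' x (?\<psi> w) R" using nbr_move nbr_keep f4 by (cases "w = y") auto
        qed
        show "\<And>w R. nbr Rh F x w R \<Longrightarrow> lab F w \<subseteq> lab F' (?\<psi> w)" using l' by auto
        show "\<And>a b. (a, b) \<in> neqr F \<Longrightarrow> a \<noteq> b \<Longrightarrow> (?\<psi> a, ?\<psi> b) \<in> neqr F' \<and> ?\<psi> a \<noteq> ?\<psi> b" by (rule nq_move)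
      qed (rule symq)
      then show ?thesis using 2 unfolding Sat'_def by blast
    next
      case 3
      have "Sat Rh F v D \<Longrightarrow> Sat Rh F' v D"
      proof (rule Sat_transfer[where \<psi> = id])
        show "\<And>w R. nbr Rh F v w R \<Longrightarrow> nbr Rh F' v (id w) R" using nbr_keep 3 by auto
        show "\<And>w R. nbr Rh F v w R \<Longrightarrow> lab F w \<subseteq> lab F' (id w)" using lmono by simp
        show "\<And>a b. (a, b) \<in> neqr F \<Longrightarrow> a \<noteq> b \<Longrightarrow> (id a, id b) \<in> neqr F' \<and> id a \<noteq> id b" using q' by simp
      qed (rule symq)
      then show ?thesis using sv mk_keep dr_keep unfolding Sat'_def by blast
    qed
  qed
  have swm: "SW F v \<le> SW F' v" for v by (rule SW_mono) (rule S)
  have ch: "children F' = children F"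
  proof -
    have "(fst e, snd e) \<in> ?E \<or> is_root (snd e)" using eE by auto
    thus ?thesis unfolding children_def[abs_def] e' by auto
  qed
  have NEs: "NE F' = NE F"
  proof -
    have "e \<in> ?E \<or> is_root (fst e)" using eE by auto
    thus ?thesis unfolding NE_def e' by auto
  qed
  have inv: "INV F'"
  proof (rule INVI)
    show "finite (nodes F')" using I_fin[OF I] n' by simp
    show "edges F' \<subseteq> nodes F' \<times> nodes F'" using I_edges[OF I] x(1) zn n' e' unfolding e_def by auto
    show "\<forall>v\<in>nodes F'. is_root v \<longrightarrow> v \<in> R0" using I_roots[OF I] n' by auto
    show "R0 \<subseteq> nodes F'" using I_R0[OF I] n' by auto
    show "\<forall>v. lab F' v \<subseteq> CLs" using I_lab[OF I] l' by auto
    show "\<forall>u v. elab F' u v \<subseteq> RL"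
    proof (intro allI)
      fix u v
      have "Rs \<subseteq> RL" unfolding Rs_def using I_elab[OF I] by (auto intro: RLs_inv)
      thus "elab F' u v \<subseteq> RL" using I_elab[OF I] el' by auto
    qed
    show "sym (neqr F')" unfolding q' by (rule sym_merge[OF symq])
    show "\<forall>u v. (u, v) \<in> edges F' \<longrightarrow> is_root v \<longrightarrow> is_root u"
    proof (intro allI impI)
      fix u v assume uv: "(u, v) \<in> edges F'" "is_root v"
      show "is_root u"
      proof (cases "(u, v) \<in> ?E")
        case True then show ?thesis using i7 uv(2) by blast
      next
        case False
        hence "(u, v) = e" "e \<notin> ?E" using uv(1) e' by auto
        then show ?thesis using ne_e by (metis fst_conv)
      qed
    qed
    show "\<forall>u u' v. (u, v) \<in> edges F' \<longrightarrow> (u', v) \<in> edges F' \<longrightarrow> \<not> is_root v \<longrightarrow> u = u'"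
    proof (intro allI impI)
      fix u u' v assume a: "(u, v) \<in> edges F'" "(u', v) \<in> edges F'" "\<not> is_root v"
      have inE: "(w, v) \<in> ?E" if "(w, v) \<in> edges F'" for w
      proof (rule ccontr)
        assume "(w, v) \<notin> ?E"
        hence "(w, v) = e" "e \<notin> ?E" using that e' by auto
        thus False using ne_e a(3) by (metis snd_conv)
      qed
      show "u = u'" using I_par[OF I inE[OF a(1)] inE[OF a(2)] a(3)] .
    qed
    show "acyclic (NE F')" using I_acyc[OF I] NEs by simp
    show "\<forall>x. \<not> is_root x \<longrightarrow> card (children F' x) \<le> SW F' x"
      using I_ch[OF I] swm ch by (metis le_trans)
    show "(\<Sum>r\<in>R0. card (children F' r)) \<le> (\<Sum>r\<in>R0. SW F' r)"
    proof -
      have "(\<Sum>r\<in>R0. card (children F' r)) \<le> (\<Sum>r\<in>R0. SW F r)" using I_chR[OF I] ch by simp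
      also have "\<dots> \<le> (\<Sum>r\<in>R0. SW F' r)" using swm by (intro sum_mono) auto
      finally show ?thesis .
    qed
    show "\<forall>v\<in>nodes F'. \<not> is_root v \<longrightarrow> (\<exists>p m. m \<le> Suc Mb \<and> rpath F' p m \<and> p m = v)"
    proof (intro ballI impI)
      fix v assume v: "v \<in> nodes F'" "\<not> is_root v"
      have "\<exists>p m. m \<le> Suc Mb \<and> rpath F p m \<and> p m = v" using I_path[OF I] v n' by simp
      then obtain p m where "m \<le> Suc Mb" "rpath F p m" "p m = v" by blast
      moreover have "rpath F' p m" by (rule rpath_mono[OF \<open>rpath F p m\<close>]) (use n' e' in auto)
      ultimately show "\<exists>p m. m \<le> Suc Mb \<and> rpath F' p m \<and> p m = v" by blast
    qed
  qed
  have al: "alive F' = alive F" unfolding alive_def using dr_keep dr_back by blast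
  have ymF: "\<not> marked F y"
  proof
    assume "marked F y"
    then obtain u where "(u, y) \<in> ?E" "elab F u y = {}" unfolding marked_def empty_edge_cond_def by blast
    moreover have "u = x" using I_par[OF I \<open>(u, y) \<in> ?E\<close> xy(1) x(8)] .
    ultimately show False using xy(2) by simp
  qed
  have ms: "markedS F \<subset> markedS F'" unfolding markedS_def using mk_keep mky ymF by blast
  show ?thesis using inv n' al ms by blast
qed

end

lemma ler_merge_fields:
  fixes F :: "('i, 'c, 'r) forest" and y z :: "'i node"
  shows "nodes (ler_merge F y z) = nodes F"
    "edges (ler_merge F y z) = {e \<in> (edges F \<union> {(z, w) | w. (y, w) \<in> edges F}) \<union>
        {(w, z) | w. (w, y) \<in> (edges F \<union> {(z, w) | w. (y, w) \<in> edges F})}. fst e \<noteq> y \<and> snd e \<noteq> y}"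
    "lab (ler_merge F y z) = ((lab F)(z := lab F z \<union> lab F y))(y := {})"
    "neqr (ler_merge F y z) = neqr F \<union> {(u, z) | u. (u, y) \<in> neqr F} \<union> {(z, u) | u. (u, y) \<in> neqr F}"
  by (auto simp: ler_merge_def Let_def add_lab_def)

lemma ler_merge_elab:
  fixes F :: "('i, 'c, 'r) forest" and y z :: "'i node"
  defines "E2 \<equiv> edges F \<union> {(z, w) | w. (y, w) \<in> edges F}"
  defines "el2 \<equiv> (\<lambda>u w. if u = z \<and> (y, w) \<in> edges F then (if (z, w) \<in> edges F then elab F z w else {}) \<union> elab F y w else elab F u w)"
  shows "elab (ler_merge F y z) w u = (if u = z \<and> (w, y) \<in> E2 then (if (w, z) \<in> E2 then el2 w z else {}) \<union> el2 w y else el2 w u)"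
  unfolding ler_merge_def Let_def add_lab_def E2_def el2_def by simp

lemma sum_redistr:
  fixes f :: "'a \<Rightarrow> nat"
  assumes "finite A" "y \<in> A" "z \<in> A" "y \<noteq> z"
  shows "(\<Sum>r\<in>A. (if r = z then f z + f y else if r = y then 0 else f r)) = (\<Sum>r\<in>A. f r)"
proof -
  let ?g = "\<lambda>r. if r = z then f z + f y else if r = y then 0 else f r"
  have A: "A = insert y (insert z (A - {y, z}))" using assms by auto
  have "(\<Sum>r\<in>A. ?g r) = ?g y + (?g z + (\<Sum>r\<in>A - {y, z}. ?g r))"
    using assms by (subst A) (simp add: sum.insert_remove)
  also have "(\<Sum>r\<in>A - {y, z}. ?g r) = (\<Sum>r\<in>A - {y, z}. f r)" by (rule sum.cong) auto
  also have "(\<Sum>r\<in>A. f r) = f y + (f z + (\<Sum>r\<in>A - {y, z}. f r))"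
    using assms by (subst A) (simp add: sum.insert_remove)
  ultimately show ?thesis using assms by simp
qed

context tab begin

lemma ler_res:
  assumes I: "INV F" and r: "ler_rule Rh F F'"
  shows "INV F' \<and> nodes F' = nodes F \<and> alive F' \<subset> alive F"
proof -
  obtain x n S C y z where x: "x \<in> nodes F" "nbr Rh F x y S" "nbr Rh F x z S" "y \<noteq> z"
     "is_root y" "is_root z" "C \<in> lab F y" "C \<in> lab F z" "(y, z) \<notin> neqr F" and F': "F' = ler_merge F y z"
    using r unfolding ler_rule_def by blast
  let ?E = "edges F"
  define E2 where "E2 = ?E \<union> {(z, w) | w. (y, w) \<in> ?E}"
  define el2 where "el2 = (\<lambda>u w. if u = z \<and> (y, w) \<in> ?E then (if (z, w) \<in> ?E then elab F z w else {}) \<union> elab F y w else elab F u w)"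
  define \<phi> where "\<phi> = (\<lambda>v. if v = y then z else v)"
  have n': "nodes F' = nodes F" unfolding F' by (simp add: ler_merge_fields)
  have e0: "edges F' = {e \<in> E2 \<union> {(w, z) | w. (w, y) \<in> E2}. fst e \<noteq> y \<and> snd e \<noteq> y}"
    unfolding F' E2_def by (simp add: ler_merge_fields)
  have l': "lab F' = ((lab F)(z := lab F z \<union> lab F y))(y := {})" unfolding F' by (simp add: ler_merge_fields)
  have el': "elab F' = (\<lambda>w u. if u = z \<and> (w, y) \<in> E2 then (if (w, z) \<in> E2 then el2 w z else {}) \<union> el2 w y else el2 w u)"
    unfolding F' E2_def el2_def by (intro ext) (rule ler_merge_elab)
  have q': "neqr F' = neqr F \<union> {(u, z) | u. (u, y) \<in> neqr F} \<union> {(z, u) | u. (u, y) \<in> neqr F}"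
    unfolding F' by (simp add: ler_merge_fields)
  have e': "edges F' = (\<lambda>(a, b). (\<phi> a, \<phi> b)) ` ?E"
  proof
    show "edges F' \<subseteq> (\<lambda>(a, b). (\<phi> a, \<phi> b)) ` ?E"
    proof
      fix p assume pe: "p \<in> edges F'"
      obtain a b where pab: "p = (a, b)" by (cases p)
      have p: "p = (a, b)" "(a, b) \<in> E2 \<or> (b = z \<and> (a, y) \<in> E2)" "a \<noteq> y" "b \<noteq> y"
        using e0 pe pab by auto
      from p(2) show "p \<in> (\<lambda>(a, b). (\<phi> a, \<phi> b)) ` ?E"
      proof
        assume "(a, b) \<in> E2"
        then consider "(a, b) \<in> ?E" | "a = z" "(y, b) \<in> ?E" unfolding E2_def by blast
        then show ?thesis
        proof cases
          case 1 then show ?thesis using p unfolding \<phi>_def by (auto intro!: image_eqI[of _ _ "(a, b)"])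
        next
          case 2 then show ?thesis using p x(4) unfolding \<phi>_def by (auto intro!: image_eqI[of _ _ "(y, b)"])
        qed
      next
        assume bz: "b = z \<and> (a, y) \<in> E2"
        then consider "(a, y) \<in> ?E" | "a = z" "(y, y) \<in> ?E" unfolding E2_def by blast
        then show ?thesis
        proof cases
          case 1 then show ?thesis using p bz unfolding \<phi>_def by (auto intro!: image_eqI[of _ _ "(a, y)"])
        next
          case 2 then show ?thesis using p bz unfolding \<phi>_def by (auto intro!: image_eqI[of _ _ "(y, y)"])
        qed
      qed
    qed
  next
    show "(\<lambda>(a, b). (\<phi> a, \<phi> b)) ` ?E \<subseteq> edges F'"
    proof
      fix p assume "p \<in> (\<lambda>(a, b). (\<phi> a, \<phi> b)) ` ?E"
      then obtain a b where ab: "(a, b) \<in> ?E" "p = (\<phi> a, \<phi> b)" by auto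
      have ny: "\<phi> a \<noteq> y" "\<phi> b \<noteq> y" unfolding \<phi>_def using x(4) by auto
      have "(\<phi> a, \<phi> b) \<in> E2 \<union> {(w, z) | w. (w, y) \<in> E2}"
        using ab(1) x(4) unfolding \<phi>_def E2_def by auto
      thus "p \<in> edges F'" using e0 ab(2) ny by auto
    qed
  qed
  have el2m: "(u, w) \<in> ?E \<Longrightarrow> elab F u w \<subseteq> el2 u w" for u w unfolding el2_def by auto
  have el3m: "(u, w) \<in> E2 \<Longrightarrow> el2 u w \<subseteq> elab F' u w" for u w unfolding el' by auto
  have elB: "(a, b) \<in> ?E \<Longrightarrow> elab F a b \<subseteq> elab F' (\<phi> a) (\<phi> b)" for a b
  proof -
    assume ab: "(a, b) \<in> ?E"
    consider "a \<noteq> y" "b \<noteq> y" | "a = y" "b \<noteq> y" | "a \<noteq> y" "b = y" | "a = y" "b = y" by blast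
    then show ?thesis
    proof cases
      case 1
      have "(a, b) \<in> E2" using ab unfolding E2_def by blast
      then show ?thesis using el2m[OF ab] el3m 1 unfolding \<phi>_def by auto
    next
      case 2
      have "elab F a b \<subseteq> el2 z b" using ab 2 unfolding el2_def by auto
      moreover have "(z, b) \<in> E2" using ab 2 unfolding E2_def by blast
      ultimately show ?thesis using el3m 2 unfolding \<phi>_def by auto
    next
      case 3
      have "elab F a b \<subseteq> el2 a y" using el2m[OF ab] 3 by simp
      moreover have "(a, y) \<in> E2" using ab 3 unfolding E2_def by blast
      ultimately show ?thesis using 3 unfolding \<phi>_def el' by auto
    next
      case 4
      have "elab F a b \<subseteq> el2 z y" using ab 4 unfolding el2_def by auto
      moreover have "(z, y) \<in> E2" using ab 4 unfolding E2_def by blast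
      ultimately show ?thesis using 4 unfolding \<phi>_def el' by auto
    qed
  qed
  have elD: "elab F' u v \<subseteq> RL" for u v
    using I_elab[OF I] unfolding el' el2_def by auto
  have phiE: "(a, b) \<in> ?E \<Longrightarrow> (\<phi> a, \<phi> b) \<in> edges F'" for a b using e' by auto
  have phi_ny: "\<phi> v \<noteq> y" for v unfolding \<phi>_def using x(4) by auto
  have phi_id: "v \<noteq> y \<Longrightarrow> \<phi> v = v" for v unfolding \<phi>_def by auto
  have phi_root: "is_root v \<Longrightarrow> is_root (\<phi> v)" for v unfolding \<phi>_def using x(6) by auto
  have phi_nr: "\<not> is_root v \<Longrightarrow> \<phi> v = v" for v unfolding \<phi>_def using x(5) by auto
  have i7: "\<And>u v. (u, v) \<in> ?E \<Longrightarrow> is_root v \<Longrightarrow> is_root u" using I_rootin[OF I] by blast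
  have elC: "(u, v) \<in> ?E \<Longrightarrow> \<not> is_root v \<Longrightarrow> elab F u v = {} \<Longrightarrow> elab F' (\<phi> u) v = {}" for u v
  proof -
    assume uv: "(u, v) \<in> ?E" "\<not> is_root v" "elab F u v = {}"
    have vz: "v \<noteq> z" using uv(2) x(6) by auto
    have "elab F' (\<phi> u) v = el2 (\<phi> u) v" unfolding el' using vz by simp
    also have "\<dots> = {}"
    proof (cases "u = y")
      case True
      have "(z, v) \<notin> ?E" using I_par[OF I uv(1) _ uv(2)] True x(4) by blast
      then show ?thesis using True uv unfolding el2_def \<phi>_def by auto
    next
      case False
      have "\<not> (u = z \<and> (y, v) \<in> ?E)" using I_par[OF I uv(1) _ uv(2)] x(4) by blast
      then show ?thesis using False uv unfolding el2_def \<phi>_def by auto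
    qed
    finally show ?thesis .
  qed
  have symq: "sym (neqr F)" using I_sym[OF I] .
  have yn: "y \<in> nodes F" using nbr_node[OF I x(2)] .
  have zn: "z \<in> nodes F" using nbr_node[OF I x(3)] .
  have ndz: "\<not> deadroot F z" using x(8) unfolding deadroot_def by auto
  have dy: "deadroot F' y"
    unfolding deadroot_def using x(5) l' e' phi_ny by auto
  have dr_keep: "deadroot F v \<Longrightarrow> deadroot F' v" for v
  proof -
    assume d: "deadroot F v"
    hence vy: "v \<noteq> y" "v \<noteq> z" using x(7) ndz unfolding deadroot_def by auto
    have pa: "\<phi> a = v \<Longrightarrow> a = v" for a unfolding \<phi>_def using vy by auto
    have "(v, w) \<notin> edges F' \<and> (w, v) \<notin> edges F'" for w
    proof
      show "(v, w) \<notin> edges F'"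
      proof
        assume "(v, w) \<in> edges F'"
        then obtain a b where ab: "(a, b) \<in> ?E" "\<phi> a = v" using e' by auto
        have "a = v" using pa[OF ab(2)] .
        thus False using ab(1) d unfolding deadroot_def by blast
      qed
      show "(w, v) \<notin> edges F'"
      proof
        assume "(w, v) \<in> edges F'"
        then obtain a b where ab: "(a, b) \<in> ?E" "\<phi> b = v" using e' by auto
        have "b = v" using pa[OF ab(2)] .
        thus False using ab(1) d unfolding deadroot_def by blast
      qed
    qed
    moreover have "lab F' v = {}" using d vy unfolding l' deadroot_def by auto
    ultimately show ?thesis using d unfolding deadroot_def by blast
  qed
  have lmv: "lab F w \<subseteq> lab F' (\<phi> w)" for w unfolding l' \<phi>_def using x(4) by auto
  have nbrm: "nbr Rh F a b R \<Longrightarrow> nbr Rh F' (\<phi> a) (\<phi> b) R" for a b R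
    unfolding nbr_def succ_r_def using elB phiE by blast
  have nqm: "(a, b) \<in> neqr F \<Longrightarrow> a \<noteq> b \<Longrightarrow> (\<phi> a, \<phi> b) \<in> neqr F' \<and> \<phi> a \<noteq> \<phi> b" for a b
  proof -
    assume ab: "(a, b) \<in> neqr F" "a \<noteq> b"
    have ba: "(b, a) \<in> neqr F" using ab symq unfolding sym_def by blast
    have ne: "\<phi> a \<noteq> \<phi> b"
    proof
      assume "\<phi> a = \<phi> b"
      hence "(a = y \<and> b = z) \<or> (a = z \<and> b = y)" using ab(2) unfolding \<phi>_def by (auto split: if_splits)
      thus False using ab ba x(9) by auto
    qed
    have "(\<phi> a, \<phi> b) \<in> neqr F'" using ab ba q' unfolding \<phi>_def by auto
    thus ?thesis using ne by blast
  qed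
  have S: "Sat' Rh F v D \<Longrightarrow> Sat' Rh F' v D" for v D
  proof (cases "v = y")
    case True then show ?thesis using dy unfolding Sat'_def by blast
  next
    case False
    assume sv: "Sat' Rh F v D"
    have "Sat Rh F v D \<Longrightarrow> Sat Rh F' (\<phi> v) D"
    proof (rule Sat_transfer[where \<psi> = \<phi>])
      show "\<And>w R. nbr Rh F v w R \<Longrightarrow> nbr Rh F' (\<phi> v) (\<phi> w) R" by (rule nbrm)
      show "\<And>w R. nbr Rh F v w R \<Longrightarrow> lab F w \<subseteq> lab F' (\<phi> w)" by (rule lmv)
      show "\<And>a b. (a, b) \<in> neqr F \<Longrightarrow> a \<noteq> b \<Longrightarrow> (\<phi> a, \<phi> b) \<in> neqr F' \<and> \<phi> a \<noteq> \<phi> b" by (rule nqm)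
    qed (rule symq)
    moreover have "marked F v \<Longrightarrow> marked F' v"
    proof -
      assume "marked F v"
      then obtain u where u: "(u, v) \<in> ?E" "elab F u v = {}" "\<not> is_root v"
        unfolding marked_def empty_edge_cond_def by blast
      have "(\<phi> u, v) \<in> edges F'" using phiE[OF u(1)] phi_nr[OF u(3)] by simp
      thus ?thesis using elC[OF u(1) u(3) u(2)] u(3) unfolding marked_def empty_edge_cond_def by blast
    qed
    ultimately show ?thesis using sv dr_keep phi_id[OF False] unfolding Sat'_def by auto
  qed
  have swm: "SW F v \<le> SW F' v" for v by (rule SW_mono) (rule S)
  have chn: "\<not> is_root v \<Longrightarrow> children F' v = children F v" for v
  proof -
    assume vr: "\<not> is_root v"
    have "(v, w) \<in> edges F' \<longleftrightarrow> (v, w) \<in> ?E" if "\<not> is_root w" for w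
    proof
      assume "(v, w) \<in> edges F'"
      then obtain a b where "(a, b) \<in> ?E" "\<phi> a = v" "\<phi> b = w" using e' by auto
      moreover have "a = v" using \<open>\<phi> a = v\<close> vr x(6) unfolding \<phi>_def by (auto split: if_splits)
      moreover have "b = w" using \<open>\<phi> b = w\<close> that x(6) unfolding \<phi>_def by (auto split: if_splits)
      ultimately show "(v, w) \<in> ?E" by simp
    next
      assume "(v, w) \<in> ?E"
      thus "(v, w) \<in> edges F'" using phiE phi_nr vr that by fastforce
    qed
    thus ?thesis unfolding children_def by auto
  qed
  have chr: "children F' r \<subseteq> (if r = z then children F z \<union> children F y else if r = y then {} else children F r)" for r
  proof
    fix w assume "w \<in> children F' r"
    hence w: "(r, w) \<in> edges F'" "\<not> is_root w" unfolding children_def by auto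
    then obtain a b where ab: "(a, b) \<in> ?E" "\<phi> a = r" "\<phi> b = w" using e' by auto
    have "b = w" using ab(3) w(2) x(6) unfolding \<phi>_def by (auto split: if_splits)
    show "w \<in> (if r = z then children F z \<union> children F y else if r = y then {} else children F r)"
      using ab \<open>b = w\<close> w(2) phi_ny unfolding children_def \<phi>_def by (auto split: if_splits)
  qed
  have finR0: "finite R0" using I_R0[OF I] I_fin[OF I] finite_subset by blast
  have yR: "y \<in> R0" "z \<in> R0" using I_roots[OF I] yn zn x(5,6) by auto
  have chR: "(\<Sum>r\<in>R0. card (children F' r)) \<le> (\<Sum>r\<in>R0. SW F' r)"
  proof -
    have "(\<Sum>r\<in>R0. card (children F' r)) \<le>
        (\<Sum>r\<in>R0. (if r = z then card (children F z) + card (children F y) else if r = y then 0 else card (children F r)))"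
    proof (rule sum_mono)
      fix r assume "r \<in> R0"
      have fc: "finite (children F r)" for r using finite_children[OF I] .
      show "card (children F' r) \<le> (if r = z then card (children F z) + card (children F y) else if r = y then 0 else card (children F r))"
      proof (cases "r = z")
        case True
        have "card (children F' r) \<le> card (children F z \<union> children F y)" using chr[of r] True fc by (simp add: card_mono)
        also have "\<dots> \<le> card (children F z) + card (children F y)" by (rule card_Un_le)
        finally show ?thesis using True by simp
      next
        case False
        then show ?thesis using chr[of r] fc by (auto simp: card_mono)
      qed
    qed
    also have "\<dots> = (\<Sum>r\<in>R0. card (children F r))" by (rule sum_redistr[OF finR0 yR x(4)])
    also have "\<dots> \<le> (\<Sum>r\<in>R0. SW F r)" by (rule I_chR[OF I])
    also have "\<dots> \<le> (\<Sum>r\<in>R0. SW F' r)" using swm by (intro sum_mono) auto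
    finally show ?thesis .
  qed
  have inv: "INV F'"
  proof (rule INVI)
    show "finite (nodes F')" using I_fin[OF I] n' by simp
    show "edges F' \<subseteq> nodes F' \<times> nodes F'"
    proof
      fix p assume "p \<in> edges F'"
      then obtain a b where "(a, b) \<in> ?E" "p = (\<phi> a, \<phi> b)" using e' by auto
      thus "p \<in> nodes F' \<times> nodes F'" using I_edges[OF I] zn n' unfolding \<phi>_def by auto
    qed
    show "\<forall>v\<in>nodes F'. is_root v \<longrightarrow> v \<in> R0" using I_roots[OF I] n' by auto
    show "R0 \<subseteq> nodes F'" using I_R0[OF I] n' by auto
    show "\<forall>v. lab F' v \<subseteq> CLs" using I_lab[OF I] l' by auto
    show "\<forall>u v. elab F' u v \<subseteq> RL" using elD by auto
    show "sym (neqr F')" unfolding q' by (rule sym_merge[OF symq])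
    show "\<forall>u v. (u, v) \<in> edges F' \<longrightarrow> is_root v \<longrightarrow> is_root u"
    proof (intro allI impI)
      fix u v assume "(u, v) \<in> edges F'" "is_root v"
      then obtain a b where ab: "(a, b) \<in> ?E" "u = \<phi> a" "v = \<phi> b" using e' by auto
      have "is_root b" using ab(3) \<open>is_root v\<close> x(5) unfolding \<phi>_def by (auto split: if_splits)
      thus "is_root u" using i7[OF ab(1)] ab(2) phi_root by simp
    qed
    show "\<forall>u u' v. (u, v) \<in> edges F' \<longrightarrow> (u', v) \<in> edges F' \<longrightarrow> \<not> is_root v \<longrightarrow> u = u'"
    proof (intro allI impI)
      fix u u' v assume a: "(u, v) \<in> edges F'" "(u', v) \<in> edges F'" "\<not> is_root v"
      obtain a b where ab: "(a, b) \<in> ?E" "u = \<phi> a" "v = \<phi> b" using a(1) e' by auto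
      obtain a' b' where ab': "(a', b') \<in> ?E" "u' = \<phi> a'" "v = \<phi> b'" using a(2) e' by auto
      have "b = v" "b' = v" using ab(3) ab'(3) a(3) x(6) unfolding \<phi>_def by (auto split: if_splits)
      hence "a = a'" using I_par[OF I] ab(1) ab'(1) a(3) by blast
      thus "u = u'" using ab(2) ab'(2) by simp
    qed
    show "acyclic (NE F')"
    proof -
      have "NE F' \<subseteq> NE F"
      proof
        fix p assume "p \<in> NE F'"
        then obtain a b where ab: "(a, b) \<in> ?E" "p = (\<phi> a, \<phi> b)" "\<not> is_root (\<phi> a)" unfolding NE_def e' by auto
        have an: "\<not> is_root a" "a \<noteq> y" using ab(3) phi_root x(5) by auto
        have "b \<noteq> y" using i7[OF ab(1)] an x(5) by auto
        thus "p \<in> NE F" using ab an phi_id unfolding NE_def by auto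
      qed
      thus ?thesis using I_acyc[OF I] acyclic_subset by blast
    qed
    show "\<forall>v. \<not> is_root v \<longrightarrow> card (children F' v) \<le> SW F' v"
      using I_ch[OF I] swm chn by (metis le_trans)
    show "(\<Sum>r\<in>R0. card (children F' r)) \<le> (\<Sum>r\<in>R0. SW F' r)" by (rule chR)
    show "\<forall>v\<in>nodes F'. \<not> is_root v \<longrightarrow> (\<exists>p m. m \<le> Suc Mb \<and> rpath F' p m \<and> p m = v)"
    proof (intro ballI impI)
      fix v assume v: "v \<in> nodes F'" "\<not> is_root v"
      have "\<exists>p m. m \<le> Suc Mb \<and> rpath F p m \<and> p m = v" using I_path[OF I] v n' by simp
      then obtain p m where pm: "m \<le> Suc Mb" "rpath F p m" "p m = v" by blast
      have "rpath F' (\<phi> \<circ> p) m"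
        using pm(2) unfolding rpath_def
      proof (intro conjI allI impI)
        assume r: "p 0 \<in> nodes F \<and> is_root (p 0) \<and> (\<forall>j. 0 < j \<and> j \<le> m \<longrightarrow> \<not> is_root (p j))
              \<and> (\<forall>j<m. (p j, p (Suc j)) \<in> edges F)"
        show "(\<phi> \<circ> p) 0 \<in> nodes F'" using r zn n' unfolding \<phi>_def by auto
        show "is_root ((\<phi> \<circ> p) 0)" using r phi_root by simp
        fix j
        show "0 < j \<and> j \<le> m \<Longrightarrow> \<not> is_root ((\<phi> \<circ> p) j)" using r phi_nr by auto
        show "j < m \<Longrightarrow> ((\<phi> \<circ> p) j, (\<phi> \<circ> p) (Suc j)) \<in> edges F'" using r phiE by auto
      qed
      moreover have "(\<phi> \<circ> p) m = v" using pm(3) phi_nr v(2) by simp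
      ultimately show "\<exists>p m. m \<le> Suc Mb \<and> rpath F' p m \<and> p m = v" using pm(1) by blast
    qed
  qed
  have "alive F' \<subseteq> alive F" unfolding alive_def using dr_keep by blast
  moreover have "y \<in> alive F" "y \<notin> alive F'" using yR x(7) dy unfolding alive_def deadroot_def by auto
  ultimately have "alive F' \<subset> alive F" by blast
  thus ?thesis using inv n' by blast
qed

end

fun ind_of :: "('i, 'c, 'r) assertion \<Rightarrow> 'i set" where
  "ind_of (CAssert a C) = {a}"
| "ind_of (RAssert a b R) = {a, b}"
| "ind_of (NeqAssert a b) = {a, b}"

lemma individuals_sub: "individuals Ab \<subseteq> (\<Union>x\<in>Ab. ind_of x)"
  unfolding individuals_def by (auto intro: bexI[rotated])

lemma finite_individuals: "finite Ab \<Longrightarrow> finite (individuals Ab)"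
proof -
  assume "finite Ab"
  moreover have "\<And>x. finite (ind_of x)" by (case_tac x) auto
  ultimately have "finite (\<Union>x\<in>Ab. ind_of x)" by blast
  thus ?thesis by (rule finite_subset[OF individuals_sub])
qed

context tab begin

lemma INV_init: "INV (init_forest Ab)"
proof (rule INVI)
  let ?F = "init_forest Ab"
  have n: "nodes ?F = R0" unfolding init_forest_def R0_def by simp
  have e: "edges ?F = {(Root a, Root b) | a b. \<exists>R. RAssert a b R \<in> Ab}" unfolding init_forest_def by simp
  have allroot: "v \<in> nodes ?F \<Longrightarrow> is_root v" for v unfolding n R0_def by auto
  show "finite (nodes ?F)" unfolding n R0_def using finite_individuals[OF finAb] by simp
  show "edges ?F \<subseteq> nodes ?F \<times> nodes ?F" unfolding e n R0_def individuals_def by blast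
  show "\<forall>v\<in>nodes ?F. is_root v \<longrightarrow> v \<in> R0" using n by simp
  show "R0 \<subseteq> nodes ?F" using n by simp
  show "\<forall>v. lab ?F v \<subseteq> CLs"
  proof
    fix v show "lab ?F v \<subseteq> CLs"
    proof (cases v)
      case (Root a)
      have "{C. CAssert a C \<in> Ab} \<subseteq> Bset Ab" unfolding Bset_def using sub_self by blast
      hence "{C. CAssert a C \<in> Ab} \<subseteq> CLs" unfolding CL_def B2_def by blast
      then show ?thesis using Root unfolding init_forest_def by simp
    next
      case (New k) then show ?thesis unfolding init_forest_def by simp
    qed
  qed
  show "\<forall>u v. elab ?F u v \<subseteq> RL"
  proof (intro allI)
    fix u v show "elab ?F u v \<subseteq> RL"
    proof (cases u; cases v)
      fix a b assume "u = Root a" "v = Root b"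
      then show ?thesis unfolding init_forest_def RLs_def RX_def by auto
    qed (auto simp: init_forest_def)
  qed
  show "sym (neqr ?F)" unfolding init_forest_def sym_def by auto
  show "\<forall>u v. (u, v) \<in> edges ?F \<longrightarrow> is_root v \<longrightarrow> is_root u" unfolding e by auto
  show "\<forall>u u' v. (u, v) \<in> edges ?F \<longrightarrow> (u', v) \<in> edges ?F \<longrightarrow> \<not> is_root v \<longrightarrow> u = u'" unfolding e by auto
  have NE0: "NE ?F = {}" unfolding NE_def e by auto
  show "acyclic (NE ?F)" unfolding NE0 acyclic_def by simp
  have ch0: "children ?F x = {}" for x unfolding children_def e by auto
  show "\<forall>x. \<not> is_root x \<longrightarrow> card (children ?F x) \<le> SW ?F x" unfolding ch0 by simp
  show "(\<Sum>r\<in>R0. card (children ?F r)) \<le> (\<Sum>r\<in>R0. SW ?F r)" unfolding ch0 by simp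
  show "\<forall>v\<in>nodes ?F. \<not> is_root v \<longrightarrow> (\<exists>p m. m \<le> Suc Mb \<and> rpath ?F p m \<and> p m = v)" using allroot by blast
qed

definition "Lset F m = {v. \<exists>p. rpath F p m \<and> p m = v}"
definition "Bd = card R0 + (\<Sum>m\<in>{1..Suc Mb}. card R0 * Wt ^ m)"

lemma Lset_bound:
  assumes I: "INV F"
  shows "0 < m \<Longrightarrow> finite (Lset F m) \<and> card (Lset F m) \<le> card R0 * Wt ^ m"
proof (induction m)
  case 0 then show ?case by simp
next
  case (Suc m)
  have fin: "finite (Lset F (Suc m))"
  proof -
    have "Lset F (Suc m) \<subseteq> nodes F"
    proof
      fix v assume "v \<in> Lset F (Suc m)"
      then obtain p where "rpath F p (Suc m)" "p (Suc m) = v" unfolding Lset_def by blast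
      thus "v \<in> nodes F" using I_edges[OF I] unfolding rpath_def by (metis lessI)
    qed
    thus ?thesis using I_fin[OF I] finite_subset by blast
  qed
  have finR0: "finite R0" using I_R0[OF I] I_fin[OF I] finite_subset by blast
  show ?case
  proof (cases m)
    case 0
    have "Lset F 1 \<subseteq> (\<Union>r\<in>R0. children F r)"
    proof
      fix v assume "v \<in> Lset F 1"
      then obtain p where p: "rpath F p 1" "p 1 = v" unfolding Lset_def by blast
      hence "p 0 \<in> R0" "(p 0, v) \<in> edges F" "\<not> is_root v" using I_roots[OF I] unfolding rpath_def by auto
      thus "v \<in> (\<Union>r\<in>R0. children F r)" unfolding children_def by blast
    qed
    hence "card (Lset F 1) \<le> card (\<Union>r\<in>R0. children F r)"
      using finR0 finite_children[OF I] by (intro card_mono) auto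
    also have "\<dots> \<le> (\<Sum>r\<in>R0. card (children F r))" by (rule card_UN_le[OF finR0])
    also have "\<dots> \<le> (\<Sum>r\<in>R0. SW F r)" by (rule I_chR[OF I])
    also have "\<dots> \<le> (\<Sum>r\<in>R0. Wt)" by (rule sum_mono) (rule SW_le_Wt)
    also have "\<dots> = card R0 * Wt" by simp
    finally show ?thesis using fin 0 by simp
  next
    case (Suc k)
    hence IH: "finite (Lset F m)" "card (Lset F m) \<le> card R0 * Wt ^ m" using Suc.IH by auto
    have "Lset F (Suc m) \<subseteq> (\<Union>u\<in>Lset F m. children F u)"
    proof
      fix v assume "v \<in> Lset F (Suc m)"
      then obtain p where p: "rpath F p (Suc m)" "p (Suc m) = v" unfolding Lset_def by blast
      have "rpath F p m" using p(1) unfolding rpath_def by auto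
      hence "p m \<in> Lset F m" unfolding Lset_def by blast
      moreover have "(p m, v) \<in> edges F" "\<not> is_root v" using p unfolding rpath_def by auto
      ultimately show "v \<in> (\<Union>u\<in>Lset F m. children F u)" unfolding children_def by blast
    qed
    hence "card (Lset F (Suc m)) \<le> card (\<Union>u\<in>Lset F m. children F u)"
      using IH(1) finite_children[OF I] by (intro card_mono) auto
    also have "\<dots> \<le> (\<Sum>u\<in>Lset F m. card (children F u))" by (rule card_UN_le[OF IH(1)])
    also have "\<dots> \<le> (\<Sum>u\<in>Lset F m. Wt)"
    proof (rule sum_mono)
      fix u assume "u \<in> Lset F m"
      then obtain p where "rpath F p m" "p m = u" unfolding Lset_def by blast
      hence "\<not> is_root u" using Suc unfolding rpath_def by auto
      thus "card (children F u) \<le> Wt" using I_ch[OF I] SW_le_Wt le_trans by blast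
    qed
    also have "\<dots> = card (Lset F m) * Wt" by simp
    also have "\<dots> \<le> card R0 * Wt ^ m * Wt" using IH(2) by simp
    also have "\<dots> = card R0 * Wt ^ Suc m" by simp
    finally show ?thesis using fin by simp
  qed
qed

lemma card_nodes_bound:
  assumes I: "INV F"
  shows "card (nodes F) \<le> Bd"
proof -
  have finR0: "finite R0" using I_R0[OF I] I_fin[OF I] finite_subset by blast
  have sub: "nodes F \<subseteq> R0 \<union> (\<Union>m\<in>{1..Suc Mb}. Lset F m)"
  proof
    fix v assume v: "v \<in> nodes F"
    show "v \<in> R0 \<union> (\<Union>m\<in>{1..Suc Mb}. Lset F m)"
    proof (cases "is_root v")
      case True then show ?thesis using I_roots[OF I v] by blast
    next
      case False
      then obtain p m where pm: "m \<le> Suc Mb" "rpath F p m" "p m = v" using I_path[OF I v] by blast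
      have "m \<noteq> 0" using pm False unfolding rpath_def by auto
      thus ?thesis using pm unfolding Lset_def by auto
    qed
  qed
  have fL: "\<And>m. m \<in> {1..Suc Mb} \<Longrightarrow> finite (Lset F m)" using Lset_bound[OF I] by auto
  have "card (nodes F) \<le> card (R0 \<union> (\<Union>m\<in>{1..Suc Mb}. Lset F m))"
    using finR0 fL by (intro card_mono[OF _ sub]) auto
  also have "\<dots> \<le> card R0 + card (\<Union>m\<in>{1..Suc Mb}. Lset F m)" by (rule card_Un_le)
  finally have c1: "card (nodes F) \<le> card R0 + card (\<Union>m\<in>{1..Suc Mb}. Lset F m)" .
  have "card (\<Union>m\<in>{1..Suc Mb}. Lset F m) \<le> (\<Sum>m\<in>{1..Suc Mb}. card (Lset F m))" by (rule card_UN_le) simp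
  also have "\<dots> \<le> (\<Sum>m\<in>{1..Suc Mb}. card R0 * Wt ^ m)"
    using Lset_bound[OF I] by (intro sum_mono) auto
  finally show ?thesis using c1 unfolding Bd_def by simp
qed

lemma markedS_nodes: "INV F \<Longrightarrow> markedS F \<subseteq> nodes F"
  unfolding markedS_def marked_def empty_edge_cond_def using I_edges by blast

lemma labsum_bound: "INV F \<Longrightarrow> labsum F \<le> Bd * card CLs"
proof -
  assume I: "INV F"
  have "labsum F \<le> (\<Sum>v\<in>nodes F. card CLs)" unfolding labsum_def
    using I_lab[OF I] finCL by (intro sum_mono card_mono) auto
  also have "\<dots> = card (nodes F) * card CLs" by simp
  also have "\<dots> \<le> Bd * card CLs" using card_nodes_bound[OF I] by simp
  finally show ?thesis .
qed

definition "key F = (Bd - card (nodes F), card (alive F), card (nodes F) - card (markedS F), Bd * card CLs - labsum F)"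
definition "keyrel = less_than <*lex*> (less_than <*lex*> (less_than <*lex*> less_than))"

lemma step_res:
  assumes I: "INV F" and s: "step A0 Tr Rh F F'"
  shows "INV F' \<and> (key F', key F) \<in> keyrel"
proof -
  have finR0: "finite R0" using I_R0[OF I] I_fin[OF I] finite_subset by blast
  have finA: "finite (alive F)" using finR0 unfolding alive_def by simp
  have lab_case: "labres F F' \<Longrightarrow> ?thesis"
  proof -
    assume "labres F F'"
    hence r: "INV F'" "nodes F' = nodes F" "alive F' = alive F" "markedS F' = markedS F" "labsum F < labsum F'"
      unfolding labres_def by auto
    have "labsum F' \<le> Bd * card CLs" using labsum_bound[OF r(1)] .
    hence "Bd * card CLs - labsum F' < Bd * card CLs - labsum F" using r(5) by simp
    thus ?thesis using r unfolding key_def keyrel_def by simp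
  qed
  have new_case: "INV F' \<and> card (nodes F) < card (nodes F') \<Longrightarrow> ?thesis"
  proof -
    assume r: "INV F' \<and> card (nodes F) < card (nodes F')"
    have "card (nodes F') \<le> Bd" using card_nodes_bound r by blast
    moreover have "card (nodes F) < card (nodes F')" using r by blast
    ultimately have "Bd - card (nodes F') < Bd - card (nodes F)" by arith
    thus ?thesis using r unfolding key_def keyrel_def by simp
  qed
  consider "and_rule Rh F F'" | "or_rule Rh F F'" | "ex_rule Rh F F'" | "all_rule Rh F F'"
     | "all_plus_rule Tr Rh F F'" | "choose_rule A0 Rh F F'" | "ge_rule Rh F F'" | "le_rule Rh F F'"
     | "ler_rule Rh F F'" using s unfolding step_def by blast
  then show ?thesis
  proof cases
    case 1 then show ?thesis using lab_case and_res[OF I] by blast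
  next
    case 2 then show ?thesis using lab_case or_res[OF I] by blast
  next
    case 3 then show ?thesis using new_case ex_res[OF I] by blast
  next
    case 4 then show ?thesis using lab_case all_res[OF I] by blast
  next
    case 5 then show ?thesis using lab_case allp_res[OF I] by blast
  next
    case 6 then show ?thesis using lab_case choose_res[OF I] by blast
  next
    case 7 then show ?thesis using new_case ge_res[OF I] by blast
  next
    case 8
    hence r: "INV F'" "nodes F' = nodes F" "alive F' = alive F" "markedS F \<subset> markedS F'"
      using le_res[OF I] by auto
    have "markedS F' \<subseteq> nodes F" using markedS_nodes[OF r(1)] r(2) by simp
    have fm: "finite (markedS F')" using \<open>markedS F' \<subseteq> nodes F\<close> I_fin[OF I] by (rule finite_subset)
    have "card (markedS F) < card (markedS F')" by (rule psubset_card_mono[OF fm r(4)])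
    moreover have "card (markedS F') \<le> card (nodes F)" by (rule card_mono[OF I_fin[OF I] \<open>markedS F' \<subseteq> nodes F\<close>])
    ultimately
    have "card (nodes F) - card (markedS F') < card (nodes F) - card (markedS F)" by arith
    thus ?thesis using r unfolding key_def keyrel_def by simp
  next
    case 9
    hence r: "INV F'" "nodes F' = nodes F" "alive F' \<subset> alive F" using ler_res[OF I] by auto
    have "card (alive F') < card (alive F)" using r(3) finA psubset_card_mono by blast
    thus ?thesis using r unfolding key_def keyrel_def by simp
  qed
qed

lemma terminates:
  "\<not> (\<exists>f. f 0 = init_forest Ab \<and> (\<forall>i. step A0 Tr Rh (f i) (f (Suc i))))"
proof
  assume "\<exists>f. f 0 = init_forest Ab \<and> (\<forall>i. step A0 Tr Rh (f i) (f (Suc i)))"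
  then obtain f where f0: "f 0 = init_forest Ab" and fs: "\<And>i. step A0 Tr Rh (f i) (f (Suc i))" by blast
  have I: "INV (f i)" for i
  proof (induction i)
    case 0 then show ?case using f0 INV_init by simp
  next
    case (Suc i) then show ?case using step_res fs by blast
  qed
  have ch: "(key (f (Suc i)), key (f i)) \<in> keyrel" for i using step_res[OF I fs] by blast
  have "\<exists>g. \<forall>i. (g (Suc i), g i) \<in> keyrel" using ch by (intro exI[of _ "\<lambda>i. key (f i)"]) simp
  moreover have "wf keyrel" unfolding keyrel_def by auto
  ultimately show False unfolding wf_iff_no_infinite_down_chain by blast
qed

end

theorem lemma8:
  fixes Ab :: "('i, 'c, 'r) assertion set"
    and Rh :: "('r role \<times> 'r role) set"
    and Tr :: "'r set"
    and A0 :: 'c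
  assumes "shiq_abox Tr Rh Ab"
    and "finite Rh"
  shows "\<not> (\<exists>f. f 0 = init_forest Ab \<and>
              (\<forall>i. \<not> clash Rh (f i) \<and> step A0 Tr Rh (f i) (f (Suc i))))"
proof -
  interpret tab Ab Rh Tr A0
  proof
    show "finite Ab" using assms(1) unfolding shiq_abox_def by blast
    show "finite Rh" by (rule assms(2))
    show "abox_nnf Ab" using assms(1) unfolding shiq_abox_def abox_nnf_def by blast
  qed
  show ?thesis using terminates by blast
qed


end
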